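(* Assume $M$ has genus zero, $q=2$, $a\in(0,1)$ and $b\in(0,1]$, and fix a bijection of $Q$ with $\{0,1\}$, so that configurations in $Q^{\mathsf V}$ are identified with subsets of $\mathsf V$. Then the marginal law of $\mathrm s$ under $\tilde\mu$, and hence also the marginal law of $\sigma$ under $\mathbf P$, satisfies the FKG lattice condition: $\nu(\xi_1\cap\xi_2)\nu(\xi_1\cup\xi_2)\ge\nu(\xi_1)\nu(\xi_2)$ for all $\xi_1,\xi_2\subseteq\mathsf V$.
   Context: $M$ is the sphere or the plane. Let $\mathsf G=(\mathsf V,\mathsf E)$ be a finite connected graph embedded in $M$ with all faces topological discs, and $\mathsf G^*=(\mathsf U,\mathsf E^* )$ its embedded dual ($\mathsf U$ = faces of $\mathsf G$); $e^*$ is the dual edge crossing $e$, $\xi^*=\{e^*:e\in\xi\}$. Fix integers $q,q'\ge1$ and finite $Q,Q'\subset\mathbb C$ with $Q=-Q$, $Q'=-Q'$, $|Q|=q$, $|Q'|=q'$. For $\sigma:\mathsf V\to Q$, $\eta(\sigma)\subseteq\mathsf E^*$ is the set of $e^*$ whose primal $e$ has endpoints with different $\sigma$-values; for $\sigma':\mathsf U\to Q'$, $\eta(\sigma')\subseteq\mathsf E$ is the set of $e$ whose dual $e^*$ has endpoints with different $\sigma'$-values. $\mathbf P(\sigma,\sigma')\propto a^{|\eta(\sigma')|}b^{|\eta(\sigma)|}$ on $\Sigma=\{(\sigma,\sigma'):\eta(\sigma)^*\cap\eta(\sigma')=\emptyset\}$. With $\alpha=\ln\frac{1-a}{b}$ and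 $\beta=\ln\big(1+\frac{q'a}{1-a}\big)$, $\tilde\mu$ is the measure on $(\mathrm s,\mathrm s')\in Q^{\mathsf V}\times Q'^{\mathsf V}$ with $\tilde\mu(\mathrm s,\mathrm s')\propto\exp\big(\sum_{\{v_1,v_2\}\in\mathsf E}\delta_{\mathrm s(v_1),\mathrm s(v_2)}(\alpha+\beta\delta_{\mathrm s'(v_1),\mathrm s'(v_2)})\big)$, $\delta$ the Kronecker delta. *)

theory Defs
  imports "HOL-Analysis.Analysis" "HOL-Combinatorics.Permutations"
begin

text \<open>A finite connected graph cellularly embedded (all faces discs) in an oriented surface is
encoded, up to homeomorphism, by a combinatorial map: a finite set of darts D (half-edges),
a fixed-point-free involution alpha (the two darts of an edge) and a permutation rot
(the cyclic order of darts around each vertex).  The dual edge e* of an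
edge e is represented by the same pair of darts; its endpoints are the faces of these darts.\<close>

definition orb :: "('d \<Rightarrow> 'd) \<Rightarrow> 'd \<Rightarrow> 'd set" where
  "orb f d = {(f ^^ n) d | n. True}"

definition vtx :: "('d \<Rightarrow> 'd) \<Rightarrow> 'd \<Rightarrow> 'd set" where
  "vtx rot d = orb rot d"

definition fce :: "('d \<Rightarrow> 'd) \<Rightarrow> ('d \<Rightarrow> 'd) \<Rightarrow> 'd \<Rightarrow> 'd set" where
  "fce alpha rot d = orb (rot \<circ> alpha) d"

definition Verts :: "'d set \<Rightarrow> ('d \<Rightarrow> 'd) \<Rightarrow> 'd set set" where
  "Verts D rot = vtx rot ` D"

definition Faces :: "'d set \<Rightarrow> ('d \<Rightarrow> 'd) \<Rightarrow> ('d \<Rightarrow> 'd) \<Rightarrow> 'd set set" where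
  "Faces D alpha rot = fce alpha rot ` D"

definition Edges :: "'d set \<Rightarrow> ('d \<Rightarrow> 'd) \<Rightarrow> 'd set set" where
  "Edges D alpha = (\<lambda>d. {d, alpha d}) ` D"

definition comb_map :: "'d set \<Rightarrow> ('d \<Rightarrow> 'd) \<Rightarrow> ('d \<Rightarrow> 'd) \<Rightarrow> bool" where
  "comb_map D alpha rot \<longleftrightarrow> finite D \<and> D \<noteq> {} \<and> alpha permutes D \<and> rot permutes D \<and>
     (\<forall>d\<in>D. alpha d \<noteq> d \<and> alpha (alpha d) = d)"

definition map_connected :: "'d set \<Rightarrow> ('d \<Rightarrow> 'd) \<Rightarrow> ('d \<Rightarrow> 'd) \<Rightarrow> bool" where
  "map_connected D alpha rot \<longleftrightarrow>
     (\<forall>d\<in>D. \<forall>d'\<in>D. (d, d') \<in> ({(x, alpha x) | x. x \<in> D} \<union> {(x, rot x) | x. x \<in> D})\<^sup>*)"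

definition genus_zero :: "'d set \<Rightarrow> ('d \<Rightarrow> 'd) \<Rightarrow> ('d \<Rightarrow> 'd) \<Rightarrow> bool" where
  "genus_zero D alpha rot \<longleftrightarrow>
     int (card (Verts D rot)) - int (card (Edges D alpha)) + int (card (Faces D alpha rot)) = 2"

definition planar_map :: "'d set \<Rightarrow> ('d \<Rightarrow> 'd) \<Rightarrow> ('d \<Rightarrow> 'd) \<Rightarrow> bool" where
  "planar_map D alpha rot \<longleftrightarrow> comb_map D alpha rot \<and> map_connected D alpha rot \<and> genus_zero D alpha rot"

text \<open>eta(sigma): the edges e whose primal endpoints carry different sigma-values
(as a set of edges, i.e. the primal edges of the dual edges in eta(sigma)).\<close>
definition eta_primal :: "'d set \<Rightarrow> ('d \<Rightarrow> 'd) \<Rightarrow> ('d \<Rightarrow> 'd) \<Rightarrow> ('d set \<Rightarrow> complex) \<Rightarrow> 'd set set" where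
  "eta_primal D alpha rot \<sigma> =
     {{d, alpha d} | d. d \<in> D \<and> \<sigma> (vtx rot d) \<noteq> \<sigma> (vtx rot (alpha d))}"

definition eta_dual :: "'d set \<Rightarrow> ('d \<Rightarrow> 'd) \<Rightarrow> ('d \<Rightarrow> 'd) \<Rightarrow> ('d set \<Rightarrow> complex) \<Rightarrow> 'd set set" where
  "eta_dual D alpha rot \<sigma>' =
     {{d, alpha d} | d. d \<in> D \<and> \<sigma>' (fce alpha rot d) \<noteq> \<sigma>' (fce alpha rot (alpha d))}"

definition Sigma_space :: "'d set \<Rightarrow> ('d \<Rightarrow> 'd) \<Rightarrow> ('d \<Rightarrow> 'd) \<Rightarrow> complex set \<Rightarrow> complex set
     \<Rightarrow> (('d set \<Rightarrow> complex) \<times> ('d set \<Rightarrow> complex)) set" where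
  "Sigma_space D alpha rot Q Q' =
     {(\<sigma>, \<sigma>'). \<sigma> \<in> Verts D rot \<rightarrow>\<^sub>E Q \<and> \<sigma>' \<in> Faces D alpha rot \<rightarrow>\<^sub>E Q' \<and>
        eta_primal D alpha rot \<sigma> \<inter> eta_dual D alpha rot \<sigma>' = {}}"

definition P_weight :: "'d set \<Rightarrow> ('d \<Rightarrow> 'd) \<Rightarrow> ('d \<Rightarrow> 'd) \<Rightarrow> real \<Rightarrow> real
     \<Rightarrow> ('d set \<Rightarrow> complex) \<Rightarrow> ('d set \<Rightarrow> complex) \<Rightarrow> real" where
  "P_weight D alpha rot a b \<sigma> \<sigma>' =
     a ^ card (eta_dual D alpha rot \<sigma>') * b ^ card (eta_primal D alpha rot \<sigma>)"

definition P_prob :: "'d set \<Rightarrow> ('d \<Rightarrow> 'd) \<Rightarrow> ('d \<Rightarrow> 'd) \<Rightarrow> complex set \<Rightarrow> complex set \<Rightarrow> real \<Rightarrow> real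
     \<Rightarrow> ('d set \<Rightarrow> complex) \<Rightarrow> ('d set \<Rightarrow> complex) \<Rightarrow> real" where
  "P_prob D alpha rot Q Q' a b \<sigma> \<sigma>' =
     (if (\<sigma>, \<sigma>') \<in> Sigma_space D alpha rot Q Q'
      then P_weight D alpha rot a b \<sigma> \<sigma>' /
           (\<Sum>p\<in>Sigma_space D alpha rot Q Q'. P_weight D alpha rot a b (fst p) (snd p))
      else 0)"

definition P_marg :: "'d set \<Rightarrow> ('d \<Rightarrow> 'd) \<Rightarrow> ('d \<Rightarrow> 'd) \<Rightarrow> complex set \<Rightarrow> complex set \<Rightarrow> real \<Rightarrow> real
     \<Rightarrow> ('d set \<Rightarrow> complex) \<Rightarrow> real" where
  "P_marg D alpha rot Q Q' a b \<sigma> =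
     (\<Sum>\<sigma>'\<in>Faces D alpha rot \<rightarrow>\<^sub>E Q'. P_prob D alpha rot Q Q' a b \<sigma> \<sigma>')"

definition kdelta :: "complex \<Rightarrow> complex \<Rightarrow> real" where
  "kdelta x y = (if x = y then 1 else 0)"

definition alpha_par :: "real \<Rightarrow> real \<Rightarrow> real" where
  "alpha_par a b = ln ((1 - a) / b)"

definition beta_par :: "nat \<Rightarrow> real \<Rightarrow> real" where
  "beta_par q' a = ln (1 + real q' * a / (1 - a))"

text \<open>unnormalised weight of (s, s') under mu-tilde; the sum over edges {v1,v2} of the
(multi)graph G ranges over the dart pairs {d, alpha d}, with endpoints vtx d, vtx (alpha d).\<close>
definition mu_weight :: "'d set \<Rightarrow> ('d \<Rightarrow> 'd) \<Rightarrow> ('d \<Rightarrow> 'd) \<Rightarrow> nat \<Rightarrow> real \<Rightarrow> real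
     \<Rightarrow> ('d set \<Rightarrow> complex) \<Rightarrow> ('d set \<Rightarrow> complex) \<Rightarrow> real" where
  "mu_weight D alpha rot q' a b s s' =
     exp (\<Sum>e\<in>Edges D alpha.
       (let d = (SOME d. d \<in> D \<and> e = {d, alpha d}); v1 = vtx rot d; v2 = vtx rot (alpha d) in
        kdelta (s v1) (s v2) * (alpha_par a b + beta_par q' a * kdelta (s' v1) (s' v2))))"

definition mu_prob :: "'d set \<Rightarrow> ('d \<Rightarrow> 'd) \<Rightarrow> ('d \<Rightarrow> 'd) \<Rightarrow> complex set \<Rightarrow> complex set \<Rightarrow> real \<Rightarrow> real
     \<Rightarrow> ('d set \<Rightarrow> complex) \<Rightarrow> ('d set \<Rightarrow> complex) \<Rightarrow> real" where
  "mu_prob D alpha rot Q Q' a b s s' =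
     (if s \<in> Verts D rot \<rightarrow>\<^sub>E Q \<and> s' \<in> Verts D rot \<rightarrow>\<^sub>E Q'
      then mu_weight D alpha rot (card Q') a b s s' /
           (\<Sum>p\<in>(Verts D rot \<rightarrow>\<^sub>E Q) \<times> (Verts D rot \<rightarrow>\<^sub>E Q').
              mu_weight D alpha rot (card Q') a b (fst p) (snd p))
      else 0)"

definition mu_marg :: "'d set \<Rightarrow> ('d \<Rightarrow> 'd) \<Rightarrow> ('d \<Rightarrow> 'd) \<Rightarrow> complex set \<Rightarrow> complex set \<Rightarrow> real \<Rightarrow> real
     \<Rightarrow> ('d set \<Rightarrow> complex) \<Rightarrow> real" where
  "mu_marg D alpha rot Q Q' a b s =
     (\<Sum>s'\<in>Verts D rot \<rightarrow>\<^sub>E Q'. mu_prob D alpha rot Q Q' a b s s')"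

definition config_of :: "(complex \<Rightarrow> nat) \<Rightarrow> complex set \<Rightarrow> 'd set set \<Rightarrow> 'd set set \<Rightarrow> ('d set \<Rightarrow> complex)" where
  "config_of f Q V \<xi> = (\<lambda>v. if v \<in> V then inv_into Q f (if v \<in> \<xi> then 1 else 0) else undefined)"

definition FKG_lattice :: "'v set \<Rightarrow> ('v set \<Rightarrow> real) \<Rightarrow> bool" where
  "FKG_lattice V \<nu> \<longleftrightarrow> (\<forall>\<xi>1 \<xi>2. \<xi>1 \<subseteq> V \<longrightarrow> \<xi>2 \<subseteq> V \<longrightarrow>
      \<nu> (\<xi>1 \<inter> \<xi>2) * \<nu> (\<xi>1 \<union> \<xi>2) \<ge> \<nu> \<xi>1 * \<nu> \<xi>2)"

end

theory Submission
  imports Defs "HOL-Combinatorics.Orbits"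
begin

lemma fft_base:
  fixes a0 a1 b0 b1 c0 c1 d0 d1 :: real
  assumes nn: "a0 \<ge> 0" "a1 \<ge> 0" "b0 \<ge> 0" "b1 \<ge> 0" "c0 \<ge> 0" "c1 \<ge> 0" "d0 \<ge> 0" "d1 \<ge> 0"
    and h1: "a0 * b0 \<le> c0 * d0" and h2: "a0 * b1 \<le> c1 * d0" and h3: "a1 * b0 \<le> c1 * d0"
    and h4: "a1 * b1 \<le> c1 * d1"
  shows "(a0 + a1) * (b0 + b1) \<le> (c0 + c1) * (d0 + d1)"
proof -
  have key: "a0 * b1 + a1 * b0 \<le> c0 * d1 + c1 * d0"
  proof (cases "c1 * d0 = 0")
    case True
    then have "a0 * b1 = 0" "a1 * b0 = 0" using h2 h3 nn True by (metis mult_nonneg_nonneg order_antisym)+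
    moreover have "0 \<le> c0 * d1" "0 \<le> c1 * d0" using nn by simp_all
    ultimately show ?thesis by linarith
  next
    case False
    define M where "M = c1 * d0"
    define T where "T = c0 * d1"
    define P where "P = a0 * b1"
    define R where "R = a1 * b0"
    have Mp: "M > 0" using False nn unfolding M_def by (simp add: less_le)
    have PR: "P * R \<le> M * T"
    proof -
      have "P * R = (a0 * b0) * (a1 * b1)" unfolding P_def R_def by (simp add: algebra_simps)
      also have "\<dots> \<le> (c0 * d0) * (c1 * d1)"
        by (intro mult_mono h1 h4) (use nn in auto)
      also have "\<dots> = M * T" unfolding M_def T_def by (simp add: algebra_simps)
      finally show ?thesis .
    qed
    have "P \<le> M" "R \<le> M" using h2 h3 unfolding P_def R_def M_def by auto
    then have "(M - P) * (M - R) \<ge> 0" by simp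
    then have "M * (P + R) \<le> M * M + P * R" by (simp add: algebra_simps)
    also have "\<dots> \<le> M * M + M * T" using PR by simp
    finally have "M * (P + R) \<le> M * (M + T)" by (simp add: algebra_simps)
    then have "P + R \<le> M + T" using Mp by simp
    then show ?thesis unfolding P_def R_def M_def T_def by simp
  qed
  show ?thesis using h1 h4 key by (simp add: algebra_simps)
qed

lemma sum_Pow_insert:
  fixes g :: "'a set \<Rightarrow> real"
  assumes "finite N" "n \<notin> N"
  shows "(\<Sum>x\<in>Pow (insert n N). g x) = (\<Sum>x\<in>Pow N. g x + g (insert n x))"
proof -
  have inj: "inj_on (insert n) (Pow N)" using assms(2) unfolding inj_on_def by (metis PowD insert_ident subsetD)
  have disj: "Pow N \<inter> insert n ` Pow N = {}" using assms(2) by blast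
  have "(\<Sum>x\<in>Pow (insert n N). g x) = (\<Sum>x\<in>Pow N. g x) + (\<Sum>x\<in>insert n ` Pow N. g x)"
    unfolding Pow_insert using assms(1) disj by (intro sum.union_disjoint) auto
  also have "(\<Sum>x\<in>insert n ` Pow N. g x) = (\<Sum>x\<in>Pow N. g (insert n x))"
    using inj by (simp add: sum.reindex)
  finally show ?thesis by (simp add: sum.distrib)
qed

theorem four_functions:
  fixes A B C D :: "'a set \<Rightarrow> real"
  assumes "finite N"
    and "\<And>x. x \<subseteq> N \<Longrightarrow> A x \<ge> 0" "\<And>x. x \<subseteq> N \<Longrightarrow> B x \<ge> 0"
    and "\<And>x. x \<subseteq> N \<Longrightarrow> C x \<ge> 0" "\<And>x. x \<subseteq> N \<Longrightarrow> D x \<ge> 0"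
    and "\<And>x y. x \<subseteq> N \<Longrightarrow> y \<subseteq> N \<Longrightarrow> A x * B y \<le> C (x \<union> y) * D (x \<inter> y)"
  shows "(\<Sum>x\<in>Pow N. A x) * (\<Sum>x\<in>Pow N. B x) \<le> (\<Sum>x\<in>Pow N. C x) * (\<Sum>x\<in>Pow N. D x)"
  using assms
proof (induction N arbitrary: A B C D rule: finite_induct)
  case empty
  then show ?case by simp
next
  case (insert n N)
  define A' where "A' x = A x + A (insert n x)" for x
  define B' where "B' x = B x + B (insert n x)" for x
  define C' where "C' x = C x + C (insert n x)" for x
  define D' where "D' x = D x + D (insert n x)" for x
  have sub: "x \<subseteq> N \<Longrightarrow> x \<subseteq> insert n N" "x \<subseteq> N \<Longrightarrow> insert n x \<subseteq> insert n N" for x by auto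
  have "(\<Sum>x\<in>Pow N. A' x) * (\<Sum>x\<in>Pow N. B' x) \<le> (\<Sum>x\<in>Pow N. C' x) * (\<Sum>x\<in>Pow N. D' x)"
  proof (rule insert.IH)
    fix x y assume x: "x \<subseteq> N" and y: "y \<subseteq> N"
    have nx: "n \<notin> x" "n \<notin> y" using x y insert.hyps by auto
    show "A' x * B' y \<le> C' (x \<union> y) * D' (x \<inter> y)"
      unfolding A'_def B'_def C'_def D'_def
    proof (rule fft_base)
      show "A x * B y \<le> C (x \<union> y) * D (x \<inter> y)" using insert.prems(5) sub x y by blast
      show "A x * B (insert n y) \<le> C (insert n (x \<union> y)) * D (x \<inter> y)"
        using insert.prems(5)[of x "insert n y"] sub x y nx by (simp add: Int_insert_right)
      show "A (insert n x) * B y \<le> C (insert n (x \<union> y)) * D (x \<inter> y)"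
        using insert.prems(5)[of "insert n x" y] sub x y nx by (simp add: Int_insert_left)
      show "A (insert n x) * B (insert n y) \<le> C (insert n (x \<union> y)) * D (insert n (x \<inter> y))"
        using insert.prems(5)[of "insert n x" "insert n y"] sub x y nx by simp
    qed (insert x y, auto intro!: insert.prems(1-4))
  qed (auto simp: A'_def B'_def C'_def D'_def intro!: add_nonneg_nonneg insert.prems(1-4))
  then show ?case
    using insert.hyps by (simp add: sum_Pow_insert A'_def B'_def C'_def D'_def)
qed

definition rcs :: "real \<Rightarrow> ('e set \<Rightarrow> real) \<Rightarrow> 'e set \<Rightarrow> real" where
  "rcs p h U = (\<Sum>w\<in>Pow U. p ^ card w * (1 - p) ^ card (U - w) * h w)"

lemma card_diff_sum:
  assumes "finite X" "finite Y" "x \<subseteq> X" "y \<subseteq> Y"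
  shows "card (X - x) + card (Y - y) = card ((X \<union> Y) - (x \<union> y)) + card ((X \<inter> Y) - (x \<inter> y))"
proof -
  have f: "finite x" "finite y" using assms(1,3) assms(2,4) by (metis finite_subset)+
  have a: "card (X - x) = card X - card x" using f(1) assms(3) by (rule card_Diff_subset)
  have b: "card (Y - y) = card Y - card y" using f(2) assms(4) by (rule card_Diff_subset)
  have c: "card ((X \<union> Y) - (x \<union> y)) = card (X \<union> Y) - card (x \<union> y)"
    by (rule card_Diff_subset) (use assms f in blast)+
  have d: "card ((X \<inter> Y) - (x \<inter> y)) = card (X \<inter> Y) - card (x \<inter> y)"
    by (rule card_Diff_subset) (use assms f in blast)+
  have e: "card x \<le> card X" "card y \<le> card Y" using assms by (simp_all add: card_mono)
  have g: "card (x \<union> y) \<le> card (X \<union> Y)" "card (x \<inter> y) \<le> card (X \<inter> Y)"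
    by (rule card_mono; use assms in blast)+
  have h: "card (X \<union> Y) + card (X \<inter> Y) = card X + card Y" using assms(1,2) by (rule card_Un_Int[symmetric])
  have i: "card (x \<union> y) + card (x \<inter> y) = card x + card y" using f by (rule card_Un_Int[symmetric])
  show ?thesis unfolding a b c d using e g h i by linarith
qed

lemma rcs_logsupermod:
  fixes h :: "'e set \<Rightarrow> real"
  assumes fin: "finite E" and p: "0 \<le> p" "p \<le> 1"
    and hnn: "\<And>x. x \<subseteq> E \<Longrightarrow> h x \<ge> 0"
    and hsm: "\<And>x y. x \<subseteq> E \<Longrightarrow> y \<subseteq> E \<Longrightarrow> h x * h y \<le> h (x \<union> y) * h (x \<inter> y)"
    and XY: "X \<subseteq> E" "Y \<subseteq> E"
  shows "rcs p h X * rcs p h Y \<le> rcs p h (X \<union> Y) * rcs p h (X \<inter> Y)"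
proof -
  define N where "N = X \<union> Y"
  have finN: "finite N" using fin XY unfolding N_def by (meson finite_Un finite_subset)
  define wt where "wt Z x = (if x \<subseteq> Z then p ^ card x * (1 - p) ^ card (Z - x) * h x else 0)" for Z x
  have S: "rcs p h Z = (\<Sum>x\<in>Pow N. wt Z x)" if "Z \<subseteq> N" for Z
    unfolding rcs_def wt_def
    by (rule sum.mono_neutral_cong_left) (use that finN in auto)
  have nnw: "wt Z x \<ge> 0" if "Z \<subseteq> E" for Z x
    unfolding wt_def using p hnn that by auto
  have "(\<Sum>x\<in>Pow N. wt X x) * (\<Sum>x\<in>Pow N. wt Y x) \<le> (\<Sum>x\<in>Pow N. wt (X \<union> Y) x) * (\<Sum>x\<in>Pow N. wt (X \<inter> Y) x)"
  proof (rule four_functions[OF finN])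
    fix x y assume x: "x \<subseteq> N" and y: "y \<subseteq> N"
    show "wt X x * wt Y y \<le> wt (X \<union> Y) (x \<union> y) * wt (X \<inter> Y) (x \<inter> y)"
    proof (cases "x \<subseteq> X \<and> y \<subseteq> Y")
      case False
      then have "wt X x * wt Y y = 0" unfolding wt_def by auto
      moreover have "0 \<le> wt (X \<union> Y) (x \<union> y) * wt (X \<inter> Y) (x \<inter> y)"
        using XY by (intro mult_nonneg_nonneg nnw) auto
      ultimately show ?thesis by (metis mult_zero_left mult_zero_right)
    next
      case True
      have xE: "x \<subseteq> E" "y \<subseteq> E" using True XY by auto
      have c1: "card x + card y = card (x \<union> y) + card (x \<inter> y)"
        using xE fin by (meson card_Un_Int finite_subset)
      have c2: "card (X - x) + card (Y - y) = card ((X \<union> Y) - (x \<union> y)) + card ((X \<inter> Y) - (x \<inter> y))"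
        using True XY fin by (intro card_diff_sum) (auto intro: finite_subset)
      have "wt X x * wt Y y = (p ^ (card x + card y) * (1 - p) ^ (card (X - x) + card (Y - y))) * (h x * h y)"
        using True unfolding wt_def by (simp add: power_add algebra_simps)
      also have "\<dots> \<le> (p ^ (card x + card y) * (1 - p) ^ (card (X - x) + card (Y - y))) * (h (x \<union> y) * h (x \<inter> y))"
        using hsm[OF xE] p by (intro mult_left_mono) auto
      also have "\<dots> = wt (X \<union> Y) (x \<union> y) * wt (X \<inter> Y) (x \<inter> y)"
        using True unfolding wt_def c1 c2 by (auto simp: power_add algebra_simps)
      finally show ?thesis .
    qed
  qed (use XY in \<open>auto intro!: nnw\<close>)
  moreover have "X \<inter> Y \<subseteq> N" "X \<subseteq> N" "Y \<subseteq> N" "X \<union> Y \<subseteq> N" unfolding N_def by auto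
  ultimately show ?thesis using S by metis
qed

lemma rcs_mono_insert:
  fixes h :: "'e set \<Rightarrow> real"
  assumes fin: "finite U" and p: "0 \<le> p" "p \<le> 1" and e: "e \<notin> U"
    and hnn: "\<And>x. x \<subseteq> U \<Longrightarrow> h x \<ge> 0"
    and hmono: "\<And>x. x \<subseteq> U \<Longrightarrow> h x \<le> h (insert e x)"
  shows "rcs p h U \<le> rcs p h (insert e U)"
proof -
  have "rcs p h (insert e U) = (\<Sum>w\<in>Pow U. p ^ card w * (1 - p) ^ card (insert e U - w) * h w
      + p ^ card (insert e w) * (1 - p) ^ card (insert e U - insert e w) * h (insert e w))"
    unfolding rcs_def using fin e by (rule sum_Pow_insert)
  also have "\<dots> = (\<Sum>w\<in>Pow U. (1 - p) * (p ^ card w * (1 - p) ^ card (U - w) * h w)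
      + p * (p ^ card w * (1 - p) ^ card (U - w) * h (insert e w)))"
  proof (rule sum.cong[OF refl])
    fix w assume w: "w \<in> Pow U"
    have fw: "finite w" using w fin by (meson PowD finite_subset)
    have "insert e U - w = insert e (U - w)" using w e by auto
    moreover have "insert e U - insert e w = U - w" using w e by auto
    moreover have "card (insert e w) = Suc (card w)" using fw w e by (subst card_insert_disjoint) auto
    moreover have "card (insert e (U - w)) = Suc (card (U - w))" using fin e by auto
    ultimately show "p ^ card w * (1 - p) ^ card (insert e U - w) * h w
      + p ^ card (insert e w) * (1 - p) ^ card (insert e U - insert e w) * h (insert e w) =
      (1 - p) * (p ^ card w * (1 - p) ^ card (U - w) * h w)
      + p * (p ^ card w * (1 - p) ^ card (U - w) * h (insert e w))" by simp
  qed
  also have "\<dots> \<ge> (\<Sum>w\<in>Pow U. (1 - p) * (p ^ card w * (1 - p) ^ card (U - w) * h w)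
      + p * (p ^ card w * (1 - p) ^ card (U - w) * h w))"
    using p hmono by (intro sum_mono add_left_mono mult_left_mono) auto
  finally show ?thesis unfolding rcs_def by (simp add: algebra_simps sum_distrib_left)
qed

lemma rcs_mono:
  fixes h :: "'e set \<Rightarrow> real"
  assumes fin: "finite E" and p: "0 \<le> p" "p \<le> 1"
    and hnn: "\<And>x. x \<subseteq> E \<Longrightarrow> h x \<ge> 0"
    and hmono: "\<And>x e. x \<subseteq> E \<Longrightarrow> e \<in> E \<Longrightarrow> h x \<le> h (insert e x)"
    and UV: "U \<subseteq> W" "W \<subseteq> E"
  shows "rcs p h U \<le> rcs p h W"
proof -
  have "finite (W - U)" using UV fin by (meson finite_Diff finite_subset)
  have "\<forall>U. U \<subseteq> E \<longrightarrow> U \<inter> C = {} \<longrightarrow> C \<subseteq> E \<longrightarrow> rcs p h U \<le> rcs p h (U \<union> C)" if "finite C" for C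
    using that
  proof (induction C rule: finite_induct)
    case empty then show ?case by simp
  next
    case (insert e C)
    show ?case
    proof (intro allI impI)
      fix U assume U: "U \<subseteq> E" "U \<inter> insert e C = {}" "insert e C \<subseteq> E"
      have "rcs p h U \<le> rcs p h (U \<union> C)" using insert.IH U by auto
      also have "\<dots> \<le> rcs p h (insert e (U \<union> C))"
        using fin U insert.hyps p by (intro rcs_mono_insert) (auto intro!: hnn hmono intro: finite_subset)
      finally show "rcs p h U \<le> rcs p h (U \<union> insert e C)" by simp
    qed
  qed
  from this[OF \<open>finite (W - U)\<close>, rule_format, of U] UV show ?thesis
    by (auto simp: Un_Diff_cancel Un_absorb1)
qed

definition adjr :: "('e \<Rightarrow> 'v \<times> 'v) \<Rightarrow> 'e set \<Rightarrow> ('v \<times> 'v) set" where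
  "adjr en w = {(x, y). \<exists>e\<in>w. en e = (x, y) \<or> en e = (y, x)}"

definition conn :: "'v set \<Rightarrow> ('e \<Rightarrow> 'v \<times> 'v) \<Rightarrow> 'e set \<Rightarrow> ('v \<times> 'v) set" where
  "conn V en w = (adjr en w)\<^sup>* \<inter> (V \<times> V)"

definition ncomp :: "'v set \<Rightarrow> ('e \<Rightarrow> 'v \<times> 'v) \<Rightarrow> 'e set \<Rightarrow> nat" where
  "ncomp V en w = card (V // conn V en w)"

definition wfg :: "'v set \<Rightarrow> ('e \<Rightarrow> 'v \<times> 'v) \<Rightarrow> 'e set \<Rightarrow> bool" where
  "wfg V en w \<longleftrightarrow> (\<forall>e\<in>w. fst (en e) \<in> V \<and> snd (en e) \<in> V)"

lemma sym_adjr: "sym (adjr en w)"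
  unfolding adjr_def sym_def by blast

lemma sym_rt_adjr: "(x, y) \<in> (adjr en w)\<^sup>* \<Longrightarrow> (y, x) \<in> (adjr en w)\<^sup>*"
  by (rule symD[OF sym_rtrancl[OF sym_adjr]])

lemma equiv_conn: "equiv V (conn V en w)"
  unfolding equiv_def refl_on_def sym_def trans_def conn_def
  using sym_rt_adjr by (auto intro: rtrancl_trans)

lemma conn_mono: "w \<subseteq> w' \<Longrightarrow> conn V en w \<subseteq> conn V en w'"
proof -
  assume "w \<subseteq> w'"
  then have "adjr en w \<subseteq> adjr en w'" unfolding adjr_def by blast
  then show ?thesis unfolding conn_def using rtrancl_mono by blast
qed

lemma adjr_insert: "adjr en (insert e w) = insert (en e) (insert (prod.swap (en e)) (adjr en w))"
  unfolding adjr_def by (cases "en e") auto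

lemma conn_insert_same:
  assumes "(fst (en e), snd (en e)) \<in> conn V en w"
  shows "conn V en (insert e w) = conn V en w"
proof -
  obtain u v where uv: "en e = (u, v)" by (cases "en e")
  let ?r = "adjr en w"
  have a: "(u, v) \<in> ?r\<^sup>*" using assms uv unfolding conn_def by auto
  have b: "(v, u) \<in> ?r\<^sup>*" using sym_rt_adjr[OF a] .
  have "(insert (u, v) (insert (v, u) ?r))\<^sup>* = ?r\<^sup>*"
    using a b by (simp add: rtrancl_insert) (blast intro: rtrancl_trans)
  then show ?thesis unfolding conn_def adjr_insert uv by simp
qed

lemma quotient_merge:
  assumes eq: "equiv V R" and uv: "u \<in> V" "v \<in> V" "(u, v) \<notin> R" and fin: "finite V"
    and R': "R' = R \<union> ((R``{u} \<union> R``{v}) \<times> (R``{u} \<union> R``{v}))"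
  shows "card (V // R') + 1 = card (V // R)"
proof -
  define B where "B = R``{u} \<union> R``{v}"
  have Rs: "R \<subseteq> V \<times> V" using eq unfolding equiv_def refl_on_def by blast
  have symR: "(x, y) \<in> R \<Longrightarrow> (y, x) \<in> R" for x y using eq unfolding equiv_def sym_def by blast
  have trR: "(x, y) \<in> R \<Longrightarrow> (y, z) \<in> R \<Longrightarrow> (x, z) \<in> R" for x y z
    using eq unfolding equiv_def trans_def by blast
  have cls: "R'``{x} = (if x \<in> B then B else R``{x})" if x: "x \<in> V" for x
  proof (cases "x \<in> B")
    case True
    have "R``{x} \<subseteq> B" using True unfolding B_def by (blast intro: trR)
    then show ?thesis using True unfolding R' B_def[symmetric] by auto
  next
    case False
    have "R``{x} \<inter> B = {}" using False unfolding B_def by (blast intro: trR symR)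
    then show ?thesis using False unfolding R' B_def[symmetric] by auto
  qed
  have Q': "V // R' = insert B ((V // R) - {R``{u}, R``{v}})"
  proof (intro equalityI subsetI)
    fix X assume "X \<in> V // R'"
    then obtain x where x: "x \<in> V" "X = R'``{x}" by (auto elim: quotientE)
    show "X \<in> insert B ((V // R) - {R``{u}, R``{v}})"
    proof (cases "x \<in> B")
      case True then show ?thesis using x cls by auto
    next
      case False
      have "R``{x} \<noteq> R``{u}" "R``{x} \<noteq> R``{v}"
        using False x uv eq unfolding B_def by (metis UnI1 UnI2 equiv_class_self)+
      then show ?thesis using x cls False by (auto intro: quotientI)
    qed
  next
    fix X assume X: "X \<in> insert B ((V // R) - {R``{u}, R``{v}})"
    show "X \<in> V // R'"
    proof (cases "X = B")
      case True
      have "u \<in> B" using equiv_class_self[OF eq uv(1)] unfolding B_def by blast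
      then have "R'``{u} = B" using cls uv by auto
      then show ?thesis using True uv by (metis quotientI)
    next
      case False
      then have XX: "X \<in> V // R" "X \<noteq> R``{u}" "X \<noteq> R``{v}" using X by auto
      then obtain x where x: "x \<in> V" "X = R``{x}" "X \<noteq> R``{u}" "X \<noteq> R``{v}"
        by (meson quotientE)
      have "x \<notin> B"
      proof
        assume "x \<in> B"
        then have "(u, x) \<in> R \<or> (v, x) \<in> R" unfolding B_def by auto
        then show False using x eq uv by (metis equiv_class_eq)
      qed
      then have "R'``{x} = X" using cls x by auto
      then show ?thesis using x by (metis quotientI)
    qed
  qed
  have finQ: "finite (V // R)" using fin Rs by (rule finite_quotient)
  have Bnot: "B \<notin> (V // R)"
  proof
    assume "B \<in> V // R"
    then obtain x where x: "x \<in> V" "B = R``{x}" by (auto elim: quotientE)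
    have "u \<in> B" "v \<in> B" using equiv_class_self[OF eq uv(1)] equiv_class_self[OF eq uv(2)] unfolding B_def by blast+
    then show False using x uv by (blast intro: trR symR)
  qed
  have ne: "R``{u} \<noteq> R``{v}" using eq uv by (metis eq_equiv_class_iff)
  have inQ: "R``{u} \<in> V // R" "R``{v} \<in> V // R" using uv by (auto intro: quotientI)
  have "card (V // R') = card ((V // R) - {R``{u}, R``{v}}) + 1"
    unfolding Q' using finQ Bnot by (subst card_insert_disjoint) auto
  moreover have "card ((V // R) - {R``{u}, R``{v}}) + 2 = card (V // R)"
  proof -
    have s: "{R``{u}, R``{v}} \<subseteq> V // R" using inQ by blast
    have c2: "card {R``{u}, R``{v}} = 2" using ne by simp
    have "card {R``{u}, R``{v}} \<le> card (V // R)" using finQ s by (rule card_mono)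
    moreover have "card ((V // R) - {R``{u}, R``{v}}) = card (V // R) - card {R``{u}, R``{v}}"
      using s by (intro card_Diff_subset) auto
    ultimately show ?thesis using c2 by linarith
  qed
  ultimately show ?thesis by linarith
qed

lemma conn_insert_diff:
  assumes wf: "wfg V en (insert e w)" and uv: "en e = (u, v)" and nc: "(u, v) \<notin> conn V en w"
  shows "conn V en (insert e w) = conn V en w \<union>
     ((conn V en w``{u} \<union> conn V en w``{v}) \<times> (conn V en w``{u} \<union> conn V en w``{v}))"
    (is "?L = ?R \<union> (?B \<times> ?B)")
proof -
  let ?r = "adjr en w"
  let ?r' = "adjr en (insert e w)"
  have r'eq: "?r' = insert (u, v) (insert (v, u) ?r)" using adjr_insert[of en e w] uv by simp
  have uvV: "u \<in> V" "v \<in> V" using wf uv unfolding wfg_def by force+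
  have sub: "?r\<^sup>* \<subseteq> ?r'\<^sup>*" unfolding r'eq by (intro rtrancl_mono) blast
  have uv': "(u, v) \<in> ?r'\<^sup>*" "(v, u) \<in> ?r'\<^sup>*" unfolding r'eq by auto
  have toU: "(x, u) \<in> ?r'\<^sup>* \<and> (u, x) \<in> ?r'\<^sup>*" if "x \<in> ?B" for x
  proof -
    from that have "(u, x) \<in> ?r\<^sup>* \<or> (v, x) \<in> ?r\<^sup>*" unfolding conn_def by auto
    then show ?thesis
    proof
      assume a: "(u, x) \<in> ?r\<^sup>*"
      then have "(x, u) \<in> ?r\<^sup>*" by (rule sym_rt_adjr)
      then show ?thesis using a sub by blast
    next
      assume a: "(v, x) \<in> ?r\<^sup>*"
      then have b: "(x, v) \<in> ?r\<^sup>*" by (rule sym_rt_adjr)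
      have "(x, u) \<in> ?r'\<^sup>*" using b sub uv'(2) by (meson rtrancl_trans subsetD)
      moreover have "(u, x) \<in> ?r'\<^sup>*" using a sub uv'(1) by (meson rtrancl_trans subsetD)
      ultimately show ?thesis by blast
    qed
  qed
  have BV: "?B \<subseteq> V" unfolding conn_def by auto
  have sup: "?R \<union> (?B \<times> ?B) \<subseteq> ?L"
  proof
    fix p assume p: "p \<in> ?R \<union> (?B \<times> ?B)"
    obtain x y where xy: "p = (x, y)" by (cases p)
    show "p \<in> ?L"
    proof (cases "p \<in> ?R")
      case True
      then show ?thesis using conn_mono[of w "insert e w" V en] by blast
    next
      case False
      then have "x \<in> ?B" "y \<in> ?B" using p xy by auto
      then have "(x, y) \<in> ?r'\<^sup>*" using toU by (meson rtrancl_trans)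
      then show ?thesis using xy \<open>x \<in> ?B\<close> \<open>y \<in> ?B\<close> BV unfolding conn_def by blast
    qed
  qed
  have eqR: "equiv V ?R" by (rule equiv_conn)
  have closedB: "y \<in> ?B" if "x \<in> ?B" "(x, y) \<in> ?R" for x y
    using that eqR unfolding equiv_def trans_def by blast
  have closedB': "x \<in> ?B" if "y \<in> ?B" "(x, y) \<in> ?R" for x y
    using that eqR unfolding equiv_def trans_def sym_def by blast
  have inB: "u \<in> ?B" "v \<in> ?B" using equiv_class_self[OF eqR uvV(1)] equiv_class_self[OF eqR uvV(2)] by blast+
  have main: "(x, y) \<in> ?R \<union> (?B \<times> ?B)" if "(x, y) \<in> ?r'\<^sup>*" "x \<in> V" for x y
    using that(1)
  proof (induction rule: rtrancl_induct)
    case base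
    then show ?case using that(2) unfolding conn_def by auto
  next
    case (step y z)
    from step.hyps(2) consider "(y, z) \<in> ?r" | "(y, z) = (u, v)" | "(y, z) = (v, u)"
      unfolding r'eq by blast
    then show ?case
    proof cases
      case 1
      then obtain e' where e': "e' \<in> w" "en e' = (y, z) \<or> en e' = (z, y)" unfolding adjr_def by blast
      have "y \<in> V" "z \<in> V" using wf e' unfolding wfg_def by force+
      then have yz: "(y, z) \<in> ?R" using 1 unfolding conn_def by blast
      from step.IH show ?thesis
      proof
        assume "(x, y) \<in> ?R"
        then have "(x, z) \<in> ?R" using yz eqR unfolding equiv_def trans_def by blast
        then show ?thesis by blast
      next
        assume "(x, y) \<in> ?B \<times> ?B"
        then show ?thesis using closedB yz by blast
      qed
    next
      case 2
      from step.IH have "x \<in> ?B" using closedB' 2 inB by blast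
      then show ?thesis using 2 inB by blast
    next
      case 3
      from step.IH have "x \<in> ?B" using closedB' 3 inB by blast
      then show ?thesis using 3 inB by blast
    qed
  qed
  have "?L \<subseteq> ?R \<union> (?B \<times> ?B)"
  proof
    fix p assume "p \<in> ?L"
    then obtain x y where "p = (x, y)" "(x, y) \<in> ?r'\<^sup>*" "x \<in> V" unfolding conn_def by blast
    then show "p \<in> ?R \<union> (?B \<times> ?B)" using main by blast
  qed
  then show ?thesis using sup by blast
qed

lemma ncomp_insert:
  assumes fin: "finite V" and wf: "wfg V en (insert e w)"
  shows "ncomp V en (insert e w) + (if (fst (en e), snd (en e)) \<in> conn V en w then 0 else 1) = ncomp V en w"
proof (cases "(fst (en e), snd (en e)) \<in> conn V en w")
  case True
  then show ?thesis unfolding ncomp_def using conn_insert_same[OF True] by simp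
next
  case False
  obtain u v where uv: "en e = (u, v)" by (cases "en e")
  have uvV: "u \<in> V" "v \<in> V" using wf uv unfolding wfg_def by force+
  have "card (V // conn V en (insert e w)) + 1 = card (V // conn V en w)"
    using quotient_merge[OF equiv_conn uvV _ fin conn_insert_diff[OF wf uv]] False uv by simp
  then show ?thesis using False unfolding ncomp_def by simp
qed

lemma ncomp_empty:
  assumes "finite V"
  shows "ncomp V en {} = card V"
proof -
  have "conn V en {} = Id_on V" unfolding conn_def adjr_def by auto
  moreover have "V // Id_on V = (\<lambda>x. {x}) ` V" unfolding quotient_def by auto
  moreover have "card ((\<lambda>x. {x}) ` V) = card V" by (rule card_image) (auto simp: inj_on_def)
  ultimately show ?thesis unfolding ncomp_def by simp
qed

lemma wfg_mono: "wfg V en E \<Longrightarrow> w \<subseteq> E \<Longrightarrow> wfg V en w"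
  unfolding wfg_def by blast

lemma ncomp_step:
  assumes fin: "finite V" and wf: "wfg V en E" and w: "w \<subseteq> E" and e: "e \<in> E"
  shows "ncomp V en (insert e w) \<le> ncomp V en w" "ncomp V en w \<le> ncomp V en (insert e w) + 1"
  using ncomp_insert[OF fin wfg_mono[OF wf], of e w] w e by (auto split: if_splits)

lemma ncomp_supermod_aux:
  assumes fin: "finite V" and wf: "wfg V en E" and XY: "X \<subseteq> Y" "Y \<subseteq> E"
    and C: "finite C" "C \<subseteq> E"
  shows "ncomp V en Y + ncomp V en (X \<union> C) \<le> ncomp V en X + ncomp V en (Y \<union> C)"
  using C
proof (induction C rule: finite_induct)
  case empty then show ?case by simp
next
  case (insert e C)
  let ?iX = "(if (fst (en e), snd (en e)) \<in> conn V en (X \<union> C) then 0 else 1) :: nat"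
  let ?iY = "(if (fst (en e), snd (en e)) \<in> conn V en (Y \<union> C) then 0 else 1) :: nat"
  have a: "ncomp V en (insert e (X \<union> C)) + ?iX = ncomp V en (X \<union> C)"
    by (rule ncomp_insert[OF fin wfg_mono[OF wf]]) (use XY insert.prems in auto)
  have b: "ncomp V en (insert e (Y \<union> C)) + ?iY = ncomp V en (Y \<union> C)"
    by (rule ncomp_insert[OF fin wfg_mono[OF wf]]) (use XY insert.prems in auto)
  have "conn V en (X \<union> C) \<subseteq> conn V en (Y \<union> C)" using XY by (intro conn_mono) auto
  then have c: "?iY \<le> ?iX" by auto
  have IH: "ncomp V en Y + ncomp V en (X \<union> C) \<le> ncomp V en X + ncomp V en (Y \<union> C)"
    using insert.IH insert.prems by auto
  have eqs: "X \<union> insert e C = insert e (X \<union> C)" "Y \<union> insert e C = insert e (Y \<union> C)" by auto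
  show ?case unfolding eqs using a b c IH by linarith
qed

lemma ncomp_supermod:
  assumes fin: "finite V" and wf: "wfg V en E" and finE: "finite E" and AB: "A \<subseteq> E" "B \<subseteq> E"
  shows "ncomp V en A + ncomp V en B \<le> ncomp V en (A \<union> B) + ncomp V en (A \<inter> B)"
proof -
  have "ncomp V en B + ncomp V en ((A \<inter> B) \<union> A) \<le> ncomp V en (A \<inter> B) + ncomp V en (B \<union> A)"
    using AB finE by (intro ncomp_supermod_aux[OF fin wf]) (auto intro: finite_subset)
  moreover have "(A \<inter> B) \<union> A = A" "B \<union> A = A \<union> B" by auto
  ultimately show ?thesis by simp
qed

definition hq :: "nat \<Rightarrow> 'v set \<Rightarrow> ('e \<Rightarrow> 'v \<times> 'v) \<Rightarrow> 'e set \<Rightarrow> real" where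
  "hq q V en w = real q ^ (card w + ncomp V en w)"

lemma hq_mono:
  assumes fin: "finite V" and wf: "wfg V en E" and finE: "finite E" and w: "w \<subseteq> E" and e: "e \<in> E"
    and q: "q \<ge> 1"
  shows "hq q V en w \<le> hq q V en (insert e w)"
proof (cases "e \<in> w")
  case True then show ?thesis by (simp add: insert_absorb)
next
  case False
  have fw: "finite w" using w finE by (rule finite_subset)
  have "card (insert e w) = card w + 1" using False fw by simp
  then have "card w + ncomp V en w \<le> card (insert e w) + ncomp V en (insert e w)"
    using ncomp_step(2)[OF fin wf w e] by linarith
  then show ?thesis unfolding hq_def using q by (intro power_increasing) auto
qed

lemma hq_supermod:
  assumes fin: "finite V" and wf: "wfg V en E" and finE: "finite E" and AB: "A \<subseteq> E" "B \<subseteq> E"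
    and q: "q \<ge> 1"
  shows "hq q V en A * hq q V en B \<le> hq q V en (A \<union> B) * hq q V en (A \<inter> B)"
proof -
  have fA: "finite A" "finite B" using AB finE by (auto intro: finite_subset)
  have "card A + card B = card (A \<union> B) + card (A \<inter> B)" using fA by (rule card_Un_Int)
  then have "(card A + ncomp V en A) + (card B + ncomp V en B)
      \<le> (card (A \<union> B) + ncomp V en (A \<union> B)) + (card (A \<inter> B) + ncomp V en (A \<inter> B))"
    using ncomp_supermod[OF fin wf finE AB] by linarith
  then show ?thesis unfolding hq_def power_add[symmetric] using q by (intro power_increasing) auto
qed

lemma hq_pos: "q \<ge> 1 \<Longrightarrow> hq q V en w > 0"
  unfolding hq_def by simp

lemma conn_const:
  assumes "\<forall>e\<in>w. s (fst (en e)) = s (snd (en e))" and "(x, y) \<in> conn V en w"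
  shows "s x = s y"
proof -
  have "(x, y) \<in> (adjr en w)\<^sup>*" using assms(2) unfolding conn_def by blast
  then show ?thesis
  proof (induction rule: rtrancl_induct)
    case base then show ?case by simp
  next
    case (step y z)
    then obtain e where "e \<in> w" "en e = (y, z) \<or> en e = (z, y)" unfolding adjr_def by blast
    then have "s y = s z" using assms(1) by (metis fst_conv snd_conv)
    then show ?case using step.IH by simp
  qed
qed

lemma count_colorings:
  fixes V :: "'v set" and Q :: "'q set" and en :: "'e \<Rightarrow> 'v \<times> 'v"
  assumes finV: "finite V" and finQ: "finite Q" and wf: "wfg V en w"
  shows "card {s \<in> V \<rightarrow>\<^sub>E Q. \<forall>e\<in>w. s (fst (en e)) = s (snd (en e))} = card Q ^ ncomp V en w"
proof -
  let ?R = "conn V en w"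
  let ?S = "{s \<in> V \<rightarrow>\<^sub>E Q. \<forall>e\<in>w. s (fst (en e)) = s (snd (en e))}"
  have eq: "equiv V ?R" by (rule equiv_conn)
  define \<Phi> where "\<Phi> g = (\<lambda>v\<in>V. g (?R``{v}))" for g :: "'v set \<Rightarrow> 'q"
  have "bij_betw \<Phi> (V // ?R \<rightarrow>\<^sub>E Q) ?S"
  proof (rule bij_betwI')
    fix g1 g2 assume g: "g1 \<in> V // ?R \<rightarrow>\<^sub>E Q" "g2 \<in> V // ?R \<rightarrow>\<^sub>E Q"
    show "(\<Phi> g1 = \<Phi> g2) = (g1 = g2)"
    proof
      assume h: "\<Phi> g1 = \<Phi> g2"
      show "g1 = g2"
      proof (rule PiE_ext[OF g])
        fix X assume "X \<in> V // ?R"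
        then obtain x where x: "x \<in> V" "X = ?R``{x}" by (rule quotientE)
        have "\<Phi> g1 x = \<Phi> g2 x" using h by simp
        then show "g1 X = g2 X" using x unfolding \<Phi>_def by simp
      qed
    qed simp
  next
    fix g assume g: "g \<in> V // ?R \<rightarrow>\<^sub>E Q"
    have "\<Phi> g \<in> V \<rightarrow>\<^sub>E Q" unfolding \<Phi>_def using g by (auto intro: quotientI)
    moreover have "\<forall>e\<in>w. \<Phi> g (fst (en e)) = \<Phi> g (snd (en e))"
    proof
      fix e assume e: "e \<in> w"
      have uv: "fst (en e) \<in> V" "snd (en e) \<in> V" using wf e unfolding wfg_def by auto
      have "(fst (en e), snd (en e)) \<in> adjr en w" using e unfolding adjr_def by force
      then have "(fst (en e), snd (en e)) \<in> ?R" using uv unfolding conn_def by blast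
      then have "?R``{fst (en e)} = ?R``{snd (en e)}" using eq by (metis equiv_class_eq)
      then show "\<Phi> g (fst (en e)) = \<Phi> g (snd (en e))" unfolding \<Phi>_def using uv by simp
    qed
    ultimately show "\<Phi> g \<in> ?S" by blast
  next
    fix s assume s: "s \<in> ?S"
    define g where "g = (\<lambda>X\<in>V // ?R. s (SOME x. x \<in> X))"
    have gQ: "g \<in> V // ?R \<rightarrow>\<^sub>E Q"
    proof -
      have "(SOME x. x \<in> X) \<in> V" if XQ: "X \<in> V // ?R" for X
      proof -
        obtain x where x: "x \<in> V" "X = ?R``{x}" using XQ by (rule quotientE)
        have "x \<in> X" using x equiv_class_self[OF eq] by blast
        then have "(SOME x. x \<in> X) \<in> X" by (rule someI)
        then show ?thesis using x unfolding conn_def by blast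
      qed
      then show ?thesis unfolding g_def using s by auto
    qed
    have "\<Phi> g = s"
    proof (rule PiE_ext)
      show "\<Phi> g \<in> V \<rightarrow>\<^sub>E Q" unfolding \<Phi>_def using gQ by (auto intro: quotientI)
      show "s \<in> V \<rightarrow>\<^sub>E Q" using s by blast
    next
      fix v assume v: "v \<in> V"
      have "v \<in> ?R``{v}" using equiv_class_self[OF eq v] .
      then have sm: "(SOME x. x \<in> ?R``{v}) \<in> ?R``{v}" by (rule someI)
      have "s (SOME x. x \<in> ?R``{v}) = s v"
        using conn_const[of w s en] s sm eq unfolding equiv_def sym_def by blast
      then show "\<Phi> g v = s v" unfolding \<Phi>_def g_def using v by (simp add: quotientI)
    qed
    then show "\<exists>g\<in>V // ?R \<rightarrow>\<^sub>E Q. s = \<Phi> g" using gQ by blast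
  qed
  then have "card ?S = card (V // ?R \<rightarrow>\<^sub>E Q)" by (simp add: bij_betw_same_card)
  also have "\<dots> = card Q ^ card (V // ?R)"
    using finV eq by (simp add: card_PiE finite_quotient equiv_type)
  finally show ?thesis unfolding ncomp_def .
qed

definition kd :: "'a \<Rightarrow> 'a \<Rightarrow> real" where "kd x y = (if x = y then 1 else 0)"

lemma rc_expansion:
  fixes x y :: "'e \<Rightarrow> real"
  assumes finV: "finite V" and finQ: "finite Q" and finE: "finite E" and wf: "wfg V en E"
  shows "(\<Sum>s\<in>V \<rightarrow>\<^sub>E Q. \<Prod>e\<in>E. x e + y e * kd (s (fst (en e))) (s (snd (en e))))
       = (\<Sum>w\<in>Pow E. (\<Prod>e\<in>E - w. x e) * (\<Prod>e\<in>w. y e) * real (card Q) ^ ncomp V en w)"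
proof -
  have "(\<Sum>s\<in>V \<rightarrow>\<^sub>E Q. \<Prod>e\<in>E. x e + y e * kd (s (fst (en e))) (s (snd (en e))))
      = (\<Sum>s\<in>V \<rightarrow>\<^sub>E Q. \<Sum>w\<in>Pow E. (\<Prod>e\<in>w. y e * kd (s (fst (en e))) (s (snd (en e)))) * (\<Prod>e\<in>E - w. x e))"
    by (intro sum.cong refl) (subst add.commute, rule prod_add[OF finE])
  also have "\<dots> = (\<Sum>w\<in>Pow E. \<Sum>s\<in>V \<rightarrow>\<^sub>E Q. (\<Prod>e\<in>w. y e * kd (s (fst (en e))) (s (snd (en e)))) * (\<Prod>e\<in>E - w. x e))"
    by (rule sum.swap)
  also have "\<dots> = (\<Sum>w\<in>Pow E. (\<Prod>e\<in>E - w. x e) * (\<Prod>e\<in>w. y e) * real (card Q) ^ ncomp V en w)"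
  proof (rule sum.cong[OF refl])
    fix w assume w: "w \<in> Pow E"
    let ?S = "{s \<in> V \<rightarrow>\<^sub>E Q. \<forall>e\<in>w. s (fst (en e)) = s (snd (en e))}"
    have finPi: "finite (V \<rightarrow>\<^sub>E Q)" using finV finQ by (simp add: finite_PiE)
    have "(\<Sum>s\<in>V \<rightarrow>\<^sub>E Q. (\<Prod>e\<in>w. y e * kd (s (fst (en e))) (s (snd (en e)))) * (\<Prod>e\<in>E - w. x e))
        = (\<Sum>s\<in>V \<rightarrow>\<^sub>E Q. (if s \<in> ?S then 1 else 0) * ((\<Prod>e\<in>E - w. x e) * (\<Prod>e\<in>w. y e)))"
    proof (rule sum.cong[OF refl])
      fix s assume s: "s \<in> V \<rightarrow>\<^sub>E Q"
      have "(\<Prod>e\<in>w. y e * kd (s (fst (en e))) (s (snd (en e))))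
          = (\<Prod>e\<in>w. y e) * (\<Prod>e\<in>w. kd (s (fst (en e))) (s (snd (en e))))"
        by (rule prod.distrib)
      moreover have "(\<Prod>e\<in>w. kd (s (fst (en e))) (s (snd (en e)))) = (if s \<in> ?S then 1 else 0)"
      proof (cases "s \<in> ?S")
        case True then show ?thesis by (simp add: kd_def)
      next
        case False
        then obtain e where "e \<in> w" "s (fst (en e)) \<noteq> s (snd (en e))" using s by blast
        moreover have "finite w" using w finE by (auto intro: finite_subset)
        ultimately show ?thesis using False by (subst prod_zero) (auto simp: kd_def)
      qed
      ultimately show "(\<Prod>e\<in>w. y e * kd (s (fst (en e))) (s (snd (en e)))) * (\<Prod>e\<in>E - w. x e)
          = (if s \<in> ?S then 1 else 0) * ((\<Prod>e\<in>E - w. x e) * (\<Prod>e\<in>w. y e))" by simp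
    qed
    also have "\<dots> = (\<Sum>s\<in>?S. (\<Prod>e\<in>E - w. x e) * (\<Prod>e\<in>w. y e))"
      by (rule sum.mono_neutral_cong_right) (auto simp: finPi)
    also have "\<dots> = real (card ?S) * ((\<Prod>e\<in>E - w. x e) * (\<Prod>e\<in>w. y e))"
      by simp
    also have "card ?S = card Q ^ ncomp V en w"
      using w by (intro count_colorings[OF finV finQ] wfg_mono[OF wf]) auto
    finally show "(\<Sum>s\<in>V \<rightarrow>\<^sub>E Q. (\<Prod>e\<in>w. y e * kd (s (fst (en e))) (s (snd (en e)))) * (\<Prod>e\<in>E - w. x e))
        = (\<Prod>e\<in>E - w. x e) * (\<Prod>e\<in>w. y e) * real (card Q) ^ ncomp V en w" by simp
  qed
  finally show ?thesis .
qed

definition Ind :: "('e \<Rightarrow> 'v \<times> 'v) \<Rightarrow> 'e set \<Rightarrow> 'v set \<Rightarrow> 'e set" where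
  "Ind en E S = {e\<in>E. fst (en e) \<in> S \<and> snd (en e) \<in> S}"

definition Agr :: "('e \<Rightarrow> 'v \<times> 'v) \<Rightarrow> 'e set \<Rightarrow> 'v set \<Rightarrow> 'e set" where
  "Agr en E S = {e\<in>E. (fst (en e) \<in> S) = (snd (en e) \<in> S)}"

lemma Agr_split:
  assumes "wfg V en E"
  shows "Agr en E S = Ind en E S \<union> Ind en E (V - S)" "Ind en E S \<inter> Ind en E (V - S) = {}"
  using assms unfolding Agr_def Ind_def wfg_def by auto

lemma sep_path:
  assumes "(x, y) \<in> (adjr en (w1 \<union> C))\<^sup>*" "x \<notin> S"
    and "w1 \<subseteq> Ind en E S" "C \<subseteq> Ind en E (V - S)"
  shows "(x, y) \<in> (adjr en C)\<^sup>* \<and> y \<notin> S"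
  using assms(1)
proof (induction rule: rtrancl_induct)
  case base then show ?case using assms(2) by simp
next
  case (step y z)
  then obtain e where e: "e \<in> w1 \<union> C" "en e = (y, z) \<or> en e = (z, y)" unfolding adjr_def by blast
  have "e \<notin> w1" using e step.IH assms(3) unfolding Ind_def by force
  then have eC: "e \<in> C" using e by blast
  then have "z \<notin> S" using e assms(4) unfolding Ind_def by force
  moreover have "(y, z) \<in> adjr en C" using eC e unfolding adjr_def by blast
  ultimately show ?case using step.IH by (meson rtrancl.rtrancl_into_rtrancl)
qed

lemma ncomp_sep:
  assumes fin: "finite V" and wf: "wfg V en E" and S: "S \<subseteq> V"
    and w1: "w1 \<subseteq> Ind en E S" and C: "finite C" "C \<subseteq> Ind en E (V - S)"
  shows "ncomp V en (w1 \<union> C) + card V = ncomp V en w1 + ncomp V en C"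
  using C
proof (induction C rule: finite_induct)
  case empty then show ?case using ncomp_empty[OF fin, of en] by simp
next
  case (insert e C)
  have IndE: "Ind en E T \<subseteq> E" for T unfolding Ind_def by auto
  have eI: "e \<in> Ind en E (V - S)" using insert.prems by auto
  have CI: "C \<subseteq> Ind en E (V - S)" using insert.prems by auto
  let ?u = "fst (en e)" and ?v = "snd (en e)"
  have same: "((?u, ?v) \<in> conn V en (w1 \<union> C)) = ((?u, ?v) \<in> conn V en C)"
  proof
    assume "(?u, ?v) \<in> conn V en (w1 \<union> C)"
    moreover have "?u \<notin> S" using eI unfolding Ind_def by auto
    ultimately show "(?u, ?v) \<in> conn V en C"
      using sep_path[OF _ _ w1 CI] unfolding conn_def by blast
  next
    assume "(?u, ?v) \<in> conn V en C"
    then show "(?u, ?v) \<in> conn V en (w1 \<union> C)" using conn_mono[of C "w1 \<union> C"] by blast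
  qed
  have a: "ncomp V en (insert e (w1 \<union> C)) + (if (?u, ?v) \<in> conn V en (w1 \<union> C) then 0 else 1) = ncomp V en (w1 \<union> C)"
    by (rule ncomp_insert[OF fin wfg_mono[OF wf]]) (use w1 eI CI IndE in blast)
  have b: "ncomp V en (insert e C) + (if (?u, ?v) \<in> conn V en C then 0 else 1) = ncomp V en C"
    by (rule ncomp_insert[OF fin wfg_mono[OF wf]]) (use eI CI IndE in blast)
  have eqs: "w1 \<union> insert e C = insert e (w1 \<union> C)" by auto
  show ?case unfolding eqs using a b same insert.IH CI by (simp split: if_splits)
qed

lemma sum_Pow_Un:
  fixes f :: "'e set \<Rightarrow> real"
  assumes "finite U1" "finite U2" "U1 \<inter> U2 = {}"
  shows "(\<Sum>w\<in>Pow (U1 \<union> U2). f w) = (\<Sum>a\<in>Pow U1. \<Sum>b\<in>Pow U2. f (a \<union> b))"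
proof -
  have inj: "inj_on (\<lambda>(a, b). a \<union> b) (Pow U1 \<times> Pow U2)"
  proof (rule inj_onI, clarify)
    fix a b a' b' assume "a \<subseteq> U1" "b \<subseteq> U2" "a' \<subseteq> U1" "b' \<subseteq> U2" "a \<union> b = a' \<union> b'"
    then show "a = a' \<and> b = b'" using assms(3) by blast
  qed
  have img: "(\<lambda>(a, b). a \<union> b) ` (Pow U1 \<times> Pow U2) = Pow (U1 \<union> U2)"
  proof (intro equalityI subsetI)
    fix w assume "w \<in> Pow (U1 \<union> U2)"
    then have "w = (\<lambda>(a, b). a \<union> b) (w \<inter> U1, w \<inter> U2)" "(w \<inter> U1, w \<inter> U2) \<in> Pow U1 \<times> Pow U2" by auto
    then show "w \<in> (\<lambda>(a, b). a \<union> b) ` (Pow U1 \<times> Pow U2)" by blast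
  qed auto
  have "(\<Sum>w\<in>Pow (U1 \<union> U2). f w) = (\<Sum>p\<in>Pow U1 \<times> Pow U2. f ((\<lambda>(a, b). a \<union> b) p))"
    unfolding img[symmetric] by (rule sum.reindex[OF inj, unfolded comp_def])
  also have "\<dots> = (\<Sum>a\<in>Pow U1. \<Sum>b\<in>Pow U2. f (a \<union> b))"
    by (simp add: sum.cartesian_product case_prod_beta)
  finally show ?thesis .
qed

lemma rcs_product:
  fixes h :: "'e set \<Rightarrow> real"
  assumes fin: "finite U1" "finite U2" and disj: "U1 \<inter> U2 = {}"
    and hp: "\<And>a b. a \<subseteq> U1 \<Longrightarrow> b \<subseteq> U2 \<Longrightarrow> h (a \<union> b) * c = h a * h b"
  shows "rcs p h (U1 \<union> U2) * c = rcs p h U1 * rcs p h U2"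
proof -
  have "rcs p h (U1 \<union> U2) = (\<Sum>a\<in>Pow U1. \<Sum>b\<in>Pow U2.
      p ^ card (a \<union> b) * (1 - p) ^ card ((U1 \<union> U2) - (a \<union> b)) * h (a \<union> b))"
    unfolding rcs_def by (rule sum_Pow_Un[OF fin disj])
  also have "\<dots> = (\<Sum>a\<in>Pow U1. \<Sum>b\<in>Pow U2.
      (p ^ card a * (1 - p) ^ card (U1 - a)) * (p ^ card b * (1 - p) ^ card (U2 - b)) * h (a \<union> b))"
  proof (intro sum.cong refl)
    fix a b assume a: "a \<in> Pow U1" and b: "b \<in> Pow U2"
    have fa: "finite a" "finite b" using a b fin by (auto intro: finite_subset)
    have "card (a \<union> b) = card a + card b" using fa a b disj by (intro card_Un_disjoint) auto
    moreover have "(U1 \<union> U2) - (a \<union> b) = (U1 - a) \<union> (U2 - b)" using a b disj by auto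
    moreover have "card ((U1 - a) \<union> (U2 - b)) = card (U1 - a) + card (U2 - b)"
      using fin disj by (intro card_Un_disjoint) auto
    ultimately show "p ^ card (a \<union> b) * (1 - p) ^ card ((U1 \<union> U2) - (a \<union> b)) * h (a \<union> b) =
      (p ^ card a * (1 - p) ^ card (U1 - a)) * (p ^ card b * (1 - p) ^ card (U2 - b)) * h (a \<union> b)"
      by (simp add: power_add)
  qed
  finally have "rcs p h (U1 \<union> U2) * c = (\<Sum>a\<in>Pow U1. \<Sum>b\<in>Pow U2.
      (p ^ card a * (1 - p) ^ card (U1 - a)) * (p ^ card b * (1 - p) ^ card (U2 - b)) * (h (a \<union> b) * c))"
    by (simp only: sum_distrib_right mult.assoc)
  also have "\<dots> = (\<Sum>a\<in>Pow U1. \<Sum>b\<in>Pow U2.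
      (p ^ card a * (1 - p) ^ card (U1 - a) * h a) * (p ^ card b * (1 - p) ^ card (U2 - b) * h b))"
    by (intro sum.cong refl) (simp add: hp)
  also have "\<dots> = rcs p h U1 * rcs p h U2"
    unfolding rcs_def by (simp add: sum_product)
  finally show ?thesis .
qed

lemma rcs_nonneg:
  assumes "0 \<le> p" "p \<le> 1" "\<And>w. w \<subseteq> U \<Longrightarrow> h w \<ge> 0"
  shows "rcs p h U \<ge> 0"
  unfolding rcs_def using assms by (intro sum_nonneg mult_nonneg_nonneg) auto

locale omsetup =
  fixes V :: "'v set" and E :: "'e set" and en :: "'e \<Rightarrow> 'v \<times> 'v" and p :: real and q :: nat and cb :: real
  assumes finV: "finite V" and finE: "finite E" and wf: "wfg V en E"
    and p0: "0 \<le> p" and p1: "p \<le> 1" and q1: "q \<ge> 1" and cb1: "cb \<ge> 1"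
begin

definition HH :: "'e set \<Rightarrow> real" where "HH U = rcs p (hq q V en) U"
definition JJ :: "'v set \<Rightarrow> real" where "JJ S = cb ^ card (Ind en E S) * HH (Ind en E S)"
definition OM :: "'v set \<Rightarrow> real" where "OM S = cb ^ card (Agr en E S) * HH (Agr en E S)"

lemma IndE: "Ind en E S \<subseteq> E" unfolding Ind_def by auto

lemma HH_nonneg: "HH U \<ge> 0"
  unfolding HH_def using p0 p1 hq_pos[OF q1] by (intro rcs_nonneg) (auto intro: less_imp_le)

lemma JJ_nonneg: "JJ S \<ge> 0"
  unfolding JJ_def using HH_nonneg cb1 by simp

lemma OM_split:
  assumes S: "S \<subseteq> V"
  shows "OM S * real q ^ card V = JJ S * JJ (V - S)"
proof -
  let ?I1 = "Ind en E S" and ?I2 = "Ind en E (V - S)"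
  have A: "Agr en E S = ?I1 \<union> ?I2" and D: "?I1 \<inter> ?I2 = {}" using Agr_split[OF wf] by auto
  have fI: "finite ?I1" "finite ?I2" using finE IndE by (auto intro: finite_subset)
  have c: "card (Agr en E S) = card ?I1 + card ?I2" unfolding A using fI D by (rule card_Un_disjoint)
  have H: "HH (?I1 \<union> ?I2) * real q ^ card V = HH ?I1 * HH ?I2"
    unfolding HH_def
  proof (rule rcs_product[OF fI D])
    fix a b assume a: "a \<subseteq> ?I1" and b: "b \<subseteq> ?I2"
    have fab: "finite a" "finite b" using a b fI by (auto intro: finite_subset)
    have "card (a \<union> b) = card a + card b" using fab a b D by (intro card_Un_disjoint) auto
    moreover have "ncomp V en (a \<union> b) + card V = ncomp V en a + ncomp V en b"
      using ncomp_sep[OF finV wf S a fab(2) b] .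
    ultimately have "card (a \<union> b) + ncomp V en (a \<union> b) + card V = (card a + ncomp V en a) + (card b + ncomp V en b)"
      by simp
    then show "hq q V en (a \<union> b) * real q ^ card V = hq q V en a * hq q V en b"
      unfolding hq_def by (metis power_add)
  qed
  show ?thesis unfolding OM_def JJ_def c A[symmetric] power_add using H[folded A]
    by (simp add: algebra_simps)
qed

lemma JJ_supermod:
  assumes "S1 \<subseteq> V" "S2 \<subseteq> V"
  shows "JJ S1 * JJ S2 \<le> JJ (S1 \<inter> S2) * JJ (S1 \<union> S2)"
proof -
  let ?I1 = "Ind en E S1" and ?I2 = "Ind en E S2"
  have i: "?I1 \<inter> ?I2 = Ind en E (S1 \<inter> S2)" unfolding Ind_def by auto
  have u: "?I1 \<union> ?I2 \<subseteq> Ind en E (S1 \<union> S2)" unfolding Ind_def by auto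
  have fI: "finite ?I1" "finite ?I2" "finite (Ind en E (S1 \<union> S2))" using finE IndE by (auto intro: finite_subset)
  have hnn: "\<And>x. x \<subseteq> E \<Longrightarrow> hq q V en x \<ge> 0" by (metis hq_pos[OF q1] less_imp_le)
  have "HH ?I1 * HH ?I2 \<le> HH (?I1 \<union> ?I2) * HH (?I1 \<inter> ?I2)"
    unfolding HH_def
    by (rule rcs_logsupermod[OF finE p0 p1 hnn hq_supermod[OF finV wf finE _ _ q1] IndE IndE])
  also have "\<dots> \<le> HH (Ind en E (S1 \<union> S2)) * HH (Ind en E (S1 \<inter> S2))"
  proof (unfold i, rule mult_right_mono)
    show "HH (?I1 \<union> ?I2) \<le> HH (Ind en E (S1 \<union> S2))"
      unfolding HH_def
      by (rule rcs_mono[OF finE p0 p1 hnn _ u IndE]) (auto intro: hq_mono[OF finV wf finE _ _ q1])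
  qed (rule HH_nonneg)
  finally have H: "HH ?I1 * HH ?I2 \<le> HH (Ind en E (S1 \<union> S2)) * HH (Ind en E (S1 \<inter> S2))" .
  have "card ?I1 + card ?I2 = card (?I1 \<union> ?I2) + card (?I1 \<inter> ?I2)" using fI(1,2) by (rule card_Un_Int)
  also have "\<dots> \<le> card (Ind en E (S1 \<union> S2)) + card (Ind en E (S1 \<inter> S2))"
    unfolding i using card_mono[OF fI(3) u] by simp
  finally have C: "cb ^ card ?I1 * cb ^ card ?I2 \<le> cb ^ card (Ind en E (S1 \<union> S2)) * cb ^ card (Ind en E (S1 \<inter> S2))"
    unfolding power_add[symmetric] using cb1 by (intro power_increasing) auto
  have "JJ S1 * JJ S2 = (cb ^ card ?I1 * cb ^ card ?I2) * (HH ?I1 * HH ?I2)"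
    unfolding JJ_def by (simp add: algebra_simps)
  also have "\<dots> \<le> (cb ^ card (Ind en E (S1 \<union> S2)) * cb ^ card (Ind en E (S1 \<inter> S2)))
      * (HH (Ind en E (S1 \<union> S2)) * HH (Ind en E (S1 \<inter> S2)))"
    using C H HH_nonneg cb1 by (rule_tac mult_mono) (auto intro!: mult_nonneg_nonneg)
  also have "\<dots> = JJ (S1 \<inter> S2) * JJ (S1 \<union> S2)"
    unfolding JJ_def by (simp add: algebra_simps)
  finally show ?thesis .
qed

lemma OM_fkg:
  assumes X: "X1 \<subseteq> V" "X2 \<subseteq> V"
  shows "OM X1 * OM X2 \<le> OM (X1 \<inter> X2) * OM (X1 \<union> X2)"
proof -
  define K where "K = real q ^ card V"
  have Kp: "K > 0" unfolding K_def using q1 by simp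
  have "(OM X1 * OM X2) * (K * K) = (OM X1 * K) * (OM X2 * K)" by (simp add: algebra_simps)
  also have "\<dots> = (JJ X1 * JJ X2) * (JJ (V - X1) * JJ (V - X2))"
    unfolding K_def using OM_split X by (simp add: algebra_simps)
  also have "\<dots> \<le> (JJ (X1 \<inter> X2) * JJ (X1 \<union> X2)) * (JJ (V - (X1 \<union> X2)) * JJ (V - (X1 \<inter> X2)))"
  proof -
    have e: "(V - X1) \<inter> (V - X2) = V - (X1 \<union> X2)" "(V - X1) \<union> (V - X2) = V - (X1 \<inter> X2)" by auto
    show ?thesis
      using JJ_supermod[OF X] JJ_supermod[of "V - X1" "V - X2"] JJ_nonneg unfolding e
      by (rule_tac mult_mono) (auto intro!: mult_nonneg_nonneg)
  qed
  also have "(JJ (X1 \<inter> X2) * JJ (X1 \<union> X2)) * (JJ (V - (X1 \<union> X2)) * JJ (V - (X1 \<inter> X2)))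
      = (JJ (X1 \<inter> X2) * JJ (V - (X1 \<inter> X2))) * (JJ (X1 \<union> X2) * JJ (V - (X1 \<union> X2)))"
    by (simp add: algebra_simps)
  also have "\<dots> = (OM (X1 \<inter> X2) * OM (X1 \<union> X2)) * (K * K)"
  proof -
    have "X1 \<inter> X2 \<subseteq> V" "X1 \<union> X2 \<subseteq> V" using X by auto
    then have a: "JJ (X1 \<inter> X2) * JJ (V - (X1 \<inter> X2)) = OM (X1 \<inter> X2) * K"
      and b: "JJ (X1 \<union> X2) * JJ (V - (X1 \<union> X2)) = OM (X1 \<union> X2) * K"
      unfolding K_def using OM_split by simp_all
    show ?thesis unfolding a b by (simp add: algebra_simps)
  qed
  finally show ?thesis using Kp by (simp add: mult_le_cancel_right)
qed

end

lemma orb_orbit: "permutation f \<Longrightarrow> orb f x = orbit f x"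
  unfolding orb_def by (simp add: orbit_altdef_permutation)

lemma orbit_same: "permutation f \<Longrightarrow> y \<in> orbit f x \<Longrightarrow> orbit f y = orbit f x"
  by (metis cyclic_on_orbit' orbit_cyclic_eq3)

locale pmap =
  fixes D :: "'d set" and alpha rot :: "'d \<Rightarrow> 'd"
  assumes pm: "planar_map D alpha rot"
begin

lemma finD: "finite D" and Dne: "D \<noteq> {}" and alpha_perm: "alpha permutes D" and rot_perm: "rot permutes D"
  and alpha_fp: "\<And>d. d \<in> D \<Longrightarrow> alpha d \<noteq> d" and alpha_inv: "\<And>d. d \<in> D \<Longrightarrow> alpha (alpha d) = d"
  using pm unfolding planar_map_def comb_map_def by auto

lemma alpha_D: "d \<in> D \<Longrightarrow> alpha d \<in> D" using alpha_perm by (simp add: permutes_in_image)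
lemma rot_D: "d \<in> D \<Longrightarrow> rot d \<in> D" using rot_perm by (simp add: permutes_in_image)

lemma perm_rot: "permutation rot" using finD rot_perm by (rule permutes_imp_permutation)
lemma perm_alpha: "permutation alpha" using finD alpha_perm by (rule permutes_imp_permutation)
lemma perm_phi: "permutation (rot \<circ> alpha)" using perm_rot perm_alpha by (rule permutation_compose)
lemma phi_perm: "(rot \<circ> alpha) permutes D" using alpha_perm rot_perm by (rule permutes_compose)

lemma vtx_orbit: "vtx rot x = orbit rot x" unfolding vtx_def using perm_rot by (rule orb_orbit)
lemma fce_orbit: "fce alpha rot x = orbit (rot \<circ> alpha) x" unfolding fce_def using perm_phi by (rule orb_orbit)

lemma vtx_self: "x \<in> vtx rot x" unfolding vtx_orbit by (rule permutation_self_in_orbit[OF perm_rot])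
lemma fce_self: "x \<in> fce alpha rot x" unfolding fce_orbit by (rule permutation_self_in_orbit[OF perm_phi])

lemma vtx_sub: "x \<in> D \<Longrightarrow> vtx rot x \<subseteq> D" unfolding vtx_orbit using rot_perm by (rule permutes_orbit_subset)
lemma fce_sub: "x \<in> D \<Longrightarrow> fce alpha rot x \<subseteq> D" unfolding fce_orbit using phi_perm by (rule permutes_orbit_subset)

lemma vtx_eq: "y \<in> vtx rot x \<Longrightarrow> vtx rot y = vtx rot x" unfolding vtx_orbit using perm_rot by (rule orbit_same)
lemma fce_eq: "y \<in> fce alpha rot x \<Longrightarrow> fce alpha rot y = fce alpha rot x" unfolding fce_orbit using perm_phi by (rule orbit_same)

lemma vtx_rot: "vtx rot (rot x) = vtx rot x"
  unfolding vtx_orbit by (rule permutation_orbit_step[OF perm_rot])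

lemma fce_rot: "fce alpha rot (rot x) = fce alpha rot (alpha x)"
proof -
  have "fce alpha rot ((rot \<circ> alpha) (alpha x)) = fce alpha rot (alpha x)"
    unfolding fce_orbit by (rule permutation_orbit_step[OF perm_phi])
  moreover have "alpha (alpha x) = x"
  proof (cases "x \<in> D")
    case True then show ?thesis by (rule alpha_inv)
  next
    case False then show ?thesis using alpha_perm by (simp add: permutes_not_in)
  qed
  ultimately show ?thesis by simp
qed

lemma vtx_iff: "x \<in> D \<Longrightarrow> y \<in> D \<Longrightarrow> (x \<in> vtx rot y) = (vtx rot x = vtx rot y)"
  using vtx_eq vtx_self by metis

lemma rot_image_vtx: "x \<in> D \<Longrightarrow> rot ` vtx rot x = vtx rot x"
proof (rule endo_inj_surj)
  assume x: "x \<in> D"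
  show "finite (vtx rot x)" using vtx_sub[OF x] finD by (rule finite_subset)
  show "rot ` vtx rot x \<subseteq> vtx rot x" unfolding vtx_orbit by (auto intro: orbit.step)
  show "inj_on rot (vtx rot x)" using rot_perm by (meson permutes_inj inj_on_subset subset_UNIV)
qed

definition rep :: "'d set \<Rightarrow> 'd" where "rep e = (SOME d. d \<in> D \<and> e = {d, alpha d})"
definition enV :: "'d set \<Rightarrow> 'd set \<times> 'd set" where "enV e = (vtx rot (rep e), vtx rot (alpha (rep e)))"
definition enF :: "'d set \<Rightarrow> 'd set \<times> 'd set" where "enF e = (fce alpha rot (rep e), fce alpha rot (alpha (rep e)))"

abbreviation "VV \<equiv> Verts D rot"
abbreviation "FF \<equiv> Faces D alpha rot"
abbreviation "EE \<equiv> Edges D alpha"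

lemma rep: "e \<in> EE \<Longrightarrow> rep e \<in> D \<and> e = {rep e, alpha (rep e)}"
  unfolding rep_def Edges_def by (rule someI_ex) blast

lemma rep_edge: "d \<in> D \<Longrightarrow> rep {d, alpha d} = d \<or> rep {d, alpha d} = alpha d"
proof -
  assume d: "d \<in> D"
  have "{d, alpha d} \<in> EE" using d unfolding Edges_def by blast
  from rep[OF this] have "{rep {d, alpha d}, alpha (rep {d, alpha d})} = {d, alpha d}" by simp
  then show ?thesis by (metis doubleton_eq_iff)
qed

lemma enV_edge: "d \<in> D \<Longrightarrow> enV {d, alpha d} = (vtx rot d, vtx rot (alpha d)) \<or> enV {d, alpha d} = (vtx rot (alpha d), vtx rot d)"
  using rep_edge alpha_inv unfolding enV_def by metis

lemma enF_edge: "d \<in> D \<Longrightarrow> enF {d, alpha d} = (fce alpha rot d, fce alpha rot (alpha d)) \<or> enF {d, alpha d} = (fce alpha rot (alpha d), fce alpha rot d)"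
  using rep_edge alpha_inv unfolding enF_def by metis

lemma finV: "finite VV" unfolding Verts_def using finD by simp
lemma finF: "finite FF" unfolding Faces_def using finD by simp
lemma finE: "finite EE" unfolding Edges_def using finD by simp

lemma wfV: "wfg VV enV EE"
  unfolding wfg_def enV_def Verts_def using rep alpha_D by auto
lemma wfF: "wfg FF enF EE"
  unfolding wfg_def enF_def Faces_def using rep alpha_D by auto

lemma edge_in: "d \<in> D \<Longrightarrow> {d, alpha d} \<in> EE" unfolding Edges_def by blast
lemma vtx_in: "d \<in> D \<Longrightarrow> vtx rot d \<in> VV" unfolding Verts_def by blast
lemma fce_in: "d \<in> D \<Longrightarrow> fce alpha rot d \<in> FF" unfolding Faces_def by blast

lemma adjV_edge: "d \<in> D \<Longrightarrow> {d, alpha d} \<in> w \<Longrightarrow> (vtx rot d, vtx rot (alpha d)) \<in> adjr enV w"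
  unfolding adjr_def using enV_edge by blast
lemma adjF_edge: "d \<in> D \<Longrightarrow> {d, alpha d} \<in> w \<Longrightarrow> (fce alpha rot d, fce alpha rot (alpha d)) \<in> adjr enF w"
  unfolding adjr_def using enF_edge by blast

end

lemma quotient_full: "V \<noteq> {} \<Longrightarrow> V // (V \<times> V) = {V}"
  unfolding quotient_def by auto

lemma parity_cycle:
  fixes P :: "'a \<Rightarrow> bool"
  assumes fin: "finite Ob" and img: "g ` Ob = Ob" and inj: "inj_on g Ob"
  shows "even (card {x\<in>Ob. P x \<noteq> P (g x)})"
proof -
  have b: "bij_betw g {x\<in>Ob. P (g x)} {y\<in>Ob. P y}"
  proof (rule bij_betw_imageI)
    show "inj_on g {x\<in>Ob. P (g x)}" using inj by (rule inj_on_subset) auto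
    show "g ` {x\<in>Ob. P (g x)} = {y\<in>Ob. P y}"
    proof (intro equalityI subsetI)
      fix y assume "y \<in> g ` {x\<in>Ob. P (g x)}" then show "y \<in> {y\<in>Ob. P y}" using img by auto
    next
      fix y assume y: "y \<in> {y\<in>Ob. P y}"
      then obtain x where "x \<in> Ob" "y = g x" using img by (metis (no_types, lifting) imageE mem_Collect_eq)
      then show "y \<in> g ` {x\<in>Ob. P (g x)}" using y by auto
    qed
  qed
  have c1: "card {x\<in>Ob. P (g x)} = card {y\<in>Ob. P y}" using b by (rule bij_betw_same_card)
  have fs: "finite {x\<in>Ob. P x \<and> P (g x)}" "finite {x\<in>Ob. P x \<and> \<not> P (g x)}" "finite {x\<in>Ob. \<not> P x \<and> P (g x)}"
    using fin by auto
  have s1: "{y\<in>Ob. P y} = {x\<in>Ob. P x \<and> P (g x)} \<union> {x\<in>Ob. P x \<and> \<not> P (g x)}" by auto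
  have s2: "{x\<in>Ob. P (g x)} = {x\<in>Ob. P x \<and> P (g x)} \<union> {x\<in>Ob. \<not> P x \<and> P (g x)}" by auto
  have s3: "{x\<in>Ob. P x \<noteq> P (g x)} = {x\<in>Ob. P x \<and> \<not> P (g x)} \<union> {x\<in>Ob. \<not> P x \<and> P (g x)}" by auto
  have "card {y\<in>Ob. P y} = card {x\<in>Ob. P x \<and> P (g x)} + card {x\<in>Ob. P x \<and> \<not> P (g x)}"
    unfolding s1 using fs by (intro card_Un_disjoint) auto
  moreover have "card {x\<in>Ob. P (g x)} = card {x\<in>Ob. P x \<and> P (g x)} + card {x\<in>Ob. \<not> P x \<and> P (g x)}"
    unfolding s2 using fs by (intro card_Un_disjoint) auto
  moreover have "card {x\<in>Ob. P x \<noteq> P (g x)} = card {x\<in>Ob. P x \<and> \<not> P (g x)} + card {x\<in>Ob. \<not> P x \<and> P (g x)}"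
    unfolding s3 using fs by (intro card_Un_disjoint) auto
  ultimately have "card {x\<in>Ob. P x \<noteq> P (g x)} = 2 * card {x\<in>Ob. P x \<and> \<not> P (g x)}"
    using c1 by linarith
  then show ?thesis by simp
qed

lemma even_involution:
  assumes "finite A" "\<And>x. x \<in> A \<Longrightarrow> f x \<in> A" "\<And>x. x \<in> A \<Longrightarrow> f x \<noteq> x" "\<And>x. x \<in> A \<Longrightarrow> f (f x) = x"
  shows "even (card A)"
  using assms
proof (induction "card A" arbitrary: A rule: less_induct)
  case less
  show ?case
  proof (cases "A = {}")
    case True then show ?thesis by simp
  next
    case False
    then obtain x where x: "x \<in> A" by blast
    let ?A = "A - {x, f x}"
    have fx: "f x \<in> A" "f x \<noteq> x" using less.prems x by auto
    have cA: "card A = card ?A + 2"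
    proof -
      have "card ?A = card A - card {x, f x}" using less.prems(1) x fx by (intro card_Diff_subset) auto
      moreover have "card {x, f x} = 2" using fx by simp
      moreover have "card {x, f x} \<le> card A" using less.prems(1) x fx by (intro card_mono) auto
      ultimately show ?thesis by linarith
    qed
    have "even (card ?A)"
    proof (rule less.hyps)
      show "card ?A < card A" using cA by simp
      show "finite ?A" using less.prems(1) by simp
      fix y assume y: "y \<in> ?A"
      then have yA: "y \<in> A" by simp
      show "f y \<noteq> y" using less.prems(3) yA .
      show "f (f y) = y" using less.prems(4) yA .
      show "f y \<in> ?A"
      proof -
        have "f y \<in> A" using less.prems(2) yA .
        moreover have "f y \<noteq> x" using y less.prems(4)[OF yA] by auto
        moreover have "f y \<noteq> f x"
        proof
          assume "f y = f x"
          then have "f (f y) = f (f x)" by simp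
          then have "y = x" using less.prems(4)[OF yA] less.prems(4)[OF x] by simp
          then show False using y by simp
        qed
        ultimately show ?thesis by simp
      qed
    qed
    then show ?thesis using cA by simp
  qed
qed

context pmap
begin

lemma map_conn: "d \<in> D \<Longrightarrow> d' \<in> D \<Longrightarrow> (d, d') \<in> ({(x, alpha x) | x. x \<in> D} \<union> {(x, rot x) | x. x \<in> D})\<^sup>*"
  using pm unfolding planar_map_def map_connected_def by blast

lemma connV_full: "conn VV enV EE = VV \<times> VV"
proof -
  have "(vtx rot d, vtx rot d') \<in> (adjr enV EE)\<^sup>*" if "d \<in> D" "d' \<in> D" for d d'
  proof -
    have "(d, d') \<in> ({(x, alpha x) | x. x \<in> D} \<union> {(x, rot x) | x. x \<in> D})\<^sup>*" using map_conn that by blast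
    then show ?thesis
    proof (induction rule: rtrancl_induct)
      case base then show ?case by simp
    next
      case (step y z)
      from step.hyps(2) show ?case
      proof
        assume "(y, z) \<in> {(x, alpha x) | x. x \<in> D}"
        then have "y \<in> D" "z = alpha y" by auto
        then have "(vtx rot y, vtx rot z) \<in> adjr enV EE" using adjV_edge edge_in by blast
        then show ?case using step.IH by (meson rtrancl.rtrancl_into_rtrancl)
      next
        assume "(y, z) \<in> {(x, rot x) | x. x \<in> D}"
        then have "z = rot y" by auto
        then show ?case using step.IH vtx_rot by simp
      qed
    qed
  qed
  then show ?thesis unfolding conn_def Verts_def by blast
qed

lemma connF_full: "conn FF enF EE = FF \<times> FF"
proof -
  have "(fce alpha rot d, fce alpha rot d') \<in> (adjr enF EE)\<^sup>*" if "d \<in> D" "d' \<in> D" for d d'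
  proof -
    have "(d, d') \<in> ({(x, alpha x) | x. x \<in> D} \<union> {(x, rot x) | x. x \<in> D})\<^sup>*" using map_conn that by blast
    then show ?thesis using that(1)
    proof (induction rule: rtrancl_induct)
      case base then show ?case by simp
    next
      case (step y z)
      from step.hyps(2) show ?case
      proof
        assume "(y, z) \<in> {(x, alpha x) | x. x \<in> D}"
        then have "y \<in> D" "z = alpha y" by auto
        then have "(fce alpha rot y, fce alpha rot z) \<in> adjr enF EE" using adjF_edge edge_in by blast
        then show ?case using step.IH step.prems by (meson rtrancl.rtrancl_into_rtrancl)
      next
        assume "(y, z) \<in> {(x, rot x) | x. x \<in> D}"
        then have y: "y \<in> D" "z = rot y" by auto
        then have "(fce alpha rot y, fce alpha rot (alpha y)) \<in> adjr enF EE" using adjF_edge edge_in by blast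
        then show ?case using step.IH step.prems y fce_rot by (metis rtrancl.rtrancl_into_rtrancl)
      qed
    qed
  qed
  then show ?thesis unfolding conn_def Faces_def by blast
qed

lemma VVne: "VV \<noteq> {}" using Dne unfolding Verts_def by blast
lemma FFne: "FF \<noteq> {}" using Dne unfolding Faces_def by blast

lemma ncompV_full: "ncomp VV enV EE = 1"
  unfolding ncomp_def connV_full quotient_full[OF VVne] by simp
lemma ncompF_full: "ncomp FF enF EE = 1"
  unfolding ncomp_def connF_full quotient_full[OF FFne] by simp

lemma euler: "int (card VV) - int (card EE) + int (card FF) = 2"
  using pm unfolding planar_map_def genus_zero_def by blast

end

context pmap
begin

lemma key_parity:
  assumes rho: "rho \<subseteq> EE" and e: "e \<in> EE" "e \<notin> rho"
    and nF: "(fst (enF e), snd (enF e)) \<notin> conn FF enF (EE - insert e rho)"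
  shows "(fst (enV e), snd (enV e)) \<in> conn VV enV rho"
proof (rule ccontr)
  define r where "r = rep e"
  have r: "r \<in> D" "e = {r, alpha r}" using rep[OF e(1)] unfolding r_def by auto
  have ar: "alpha r \<in> D" using r alpha_D by blast
  define RF where "RF = conn FF enF (EE - insert e rho)"
  define RV where "RV = conn VV enV rho"
  have eqF: "equiv FF RF" unfolding RF_def by (rule equiv_conn)
  have eqV: "equiv VV RV" unfolding RV_def by (rule equiv_conn)
  have nF': "(fce alpha rot r, fce alpha rot (alpha r)) \<notin> RF"
    using nF unfolding RF_def enF_def r_def by simp
  assume "(fst (enV e), snd (enV e)) \<notin> conn VV enV rho"
  then have nV: "(vtx rot r, vtx rot (alpha r)) \<notin> RV" unfolding RV_def enV_def r_def by simp
  define X where "X = {x\<in>D. (fce alpha rot r, fce alpha rot x) \<in> RF}"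
  have Xrot: "(rot x \<in> X) = (alpha x \<in> X)" if "x \<in> D" for x
    using that fce_rot[of x] rot_D alpha_D unfolding X_def by auto
  define Cut where "Cut = {x\<in>D. (x \<in> X) \<noteq> (alpha x \<in> X)}"
  have Cut_alpha: "alpha x \<in> Cut" if "x \<in> Cut" for x
    using that alpha_D alpha_inv unfolding Cut_def by auto
  have cut_edge: "{x, alpha x} \<in> insert e rho" if x: "x \<in> Cut" for x
  proof (rule ccontr)
    assume ni: "{x, alpha x} \<notin> insert e rho"
    have xD: "x \<in> D" using x unfolding Cut_def by simp
    have "{x, alpha x} \<in> EE - insert e rho" using edge_in[OF xD] ni by (rule DiffI)
    then have "(fce alpha rot x, fce alpha rot (alpha x)) \<in> adjr enF (EE - insert e rho)"
      by (rule adjF_edge[OF xD])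
    moreover have "fce alpha rot x \<in> FF" "fce alpha rot (alpha x) \<in> FF" using xD alpha_D fce_in by auto
    ultimately have rel: "(fce alpha rot x, fce alpha rot (alpha x)) \<in> RF" unfolding RF_def conn_def by blast
    have "(x \<in> X) = (alpha x \<in> X)"
      using rel eqF xD alpha_D[OF xD] unfolding X_def equiv_def trans_def sym_def by blast
    then show False using x unfolding Cut_def by blast
  qed
  define K where "K = RV``{vtx rot r}"
  have KV: "K \<subseteq> VV" unfolding K_def RV_def conn_def by auto
  define T where "T = {x\<in>Cut. vtx rot x \<in> K}"
  have CutD: "Cut \<subseteq> D" unfolding Cut_def by auto
  have finT: "finite T" using finD CutD unfolding T_def by (auto intro: finite_subset)
  \<comment> \<open>T has even cardinality: it is a disjoint union over the vertices in K\<close>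
  have evenT: "even (card T)"
  proof -
    have Tun: "T = (\<Union>Ob\<in>K. {x\<in>Ob. x \<in> Cut})"
    proof (intro equalityI subsetI)
      fix x assume "x \<in> T"
      then have "x \<in> Cut" "vtx rot x \<in> K" unfolding T_def by auto
      then show "x \<in> (\<Union>Ob\<in>K. {x\<in>Ob. x \<in> Cut})" using vtx_self by blast
    next
      fix x assume "x \<in> (\<Union>Ob\<in>K. {x\<in>Ob. x \<in> Cut})"
      then obtain Ob where Ob: "Ob \<in> K" "x \<in> Ob" "x \<in> Cut" by blast
      then obtain y where "y \<in> D" "Ob = vtx rot y" using KV unfolding Verts_def by blast
      then have "vtx rot x = Ob" using Ob vtx_eq by blast
      then show "x \<in> T" using Ob unfolding T_def by simp
    qed
    have finK: "finite K" using KV finV by (rule finite_subset)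
    have each: "even (card {x\<in>Ob. x \<in> Cut})" if Ob: "Ob \<in> K" for Ob
    proof -
      obtain y where y: "y \<in> D" "Ob = vtx rot y" using Ob KV unfolding Verts_def by blast
      have ObD: "Ob \<subseteq> D" using vtx_sub y by simp
      have "{x\<in>Ob. x \<in> Cut} = {x\<in>Ob. (x \<in> X) \<noteq> (rot x \<in> X)}"
        using ObD Xrot unfolding Cut_def by auto
      moreover have "even (card {x\<in>Ob. (x \<in> X) \<noteq> (rot x \<in> X)})"
      proof (rule parity_cycle)
        show "finite Ob" using ObD finD by (rule finite_subset)
        show "rot ` Ob = Ob" using rot_image_vtx y by simp
        show "inj_on rot Ob" using rot_perm by (meson permutes_inj inj_on_subset subset_UNIV)
      qed
      ultimately show ?thesis by simp
    qed
    have disj: "{x\<in>O1. x \<in> Cut} \<inter> {x\<in>O2. x \<in> Cut} = {}" if OO: "O1 \<in> K" "O2 \<in> K" "O1 \<noteq> O2" for O1 O2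
    proof -
      obtain y1 where y1: "O1 = vtx rot y1" using OO KV unfolding Verts_def by blast
      obtain y2 where y2: "O2 = vtx rot y2" using OO KV unfolding Verts_def by blast
      have "x \<notin> O1 \<or> x \<notin> O2" for x using vtx_eq y1 y2 OO(3) by metis
      then show ?thesis by blast
    qed
    have "card T = (\<Sum>Ob\<in>K. card {x\<in>Ob. x \<in> Cut})"
      unfolding Tun
    proof (rule card_UN_disjoint[OF finK])
      show "\<forall>i\<in>K. finite {x \<in> i. x \<in> Cut}"
        using finD CutD by (auto intro: finite_subset)
      show "\<forall>i\<in>K. \<forall>j\<in>K. i \<noteq> j \<longrightarrow> {x \<in> i. x \<in> Cut} \<inter> {x \<in> j. x \<in> Cut} = {}"
        using disj by blast
    qed
    also have "even \<dots>" using each by (intro dvd_sum) auto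
    finally show ?thesis .
  qed
  \<comment> \<open>but T also has odd cardinality\<close>
  have rT: "r \<in> T"
  proof -
    have "fce alpha rot r \<in> FF" using r fce_in by auto
    then have "r \<in> X" using eqF r unfolding X_def equiv_def refl_on_def by blast
    moreover have "alpha r \<notin> X" using nF' unfolding X_def by blast
    ultimately have "r \<in> Cut" using r unfolding Cut_def by blast
    moreover have "vtx rot r \<in> K" unfolding K_def by (rule equiv_class_self[OF eqV vtx_in[OF r(1)]])
    ultimately show ?thesis unfolding T_def by blast
  qed
  have arT: "alpha r \<notin> T"
  proof
    assume "alpha r \<in> T"
    then have "(vtx rot r, vtx rot (alpha r)) \<in> RV" unfolding T_def K_def by blast
    then show False using nV by blast
  qed
  have "even (card (T - {r}))"
  proof (rule even_involution[where f = alpha])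
    show "finite (T - {r})" using finT by simp
    fix x assume x: "x \<in> T - {r}"
    have xD: "x \<in> D" using x CutD unfolding T_def by auto
    show "alpha x \<noteq> x" using alpha_fp[OF xD] .
    show "alpha (alpha x) = x" using alpha_inv[OF xD] .
    have xr: "x \<noteq> alpha r" using x arT by auto
    have "{x, alpha x} \<in> insert e rho" using cut_edge x unfolding T_def by blast
    moreover have "{x, alpha x} \<noteq> e"
    proof
      assume "{x, alpha x} = e"
      then have "x = r \<or> x = alpha r" using r by (metis doubleton_eq_iff)
      then show False using x xr by auto
    qed
    ultimately have inr: "{x, alpha x} \<in> rho" by blast
    have "(vtx rot x, vtx rot (alpha x)) \<in> adjr enV rho" using adjV_edge[OF xD inr] .
    moreover have "vtx rot x \<in> VV" "vtx rot (alpha x) \<in> VV" using xD alpha_D vtx_in by auto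
    ultimately have "(vtx rot x, vtx rot (alpha x)) \<in> RV" unfolding RV_def conn_def by blast
    moreover have "vtx rot x \<in> K" using x unfolding T_def by auto
    ultimately have "vtx rot (alpha x) \<in> K"
      using eqV unfolding K_def equiv_def trans_def by blast
    moreover have "alpha x \<in> Cut" using Cut_alpha x unfolding T_def by blast
    moreover have "alpha x \<noteq> r" using alpha_inv[OF xD] xr by metis
    ultimately show "alpha x \<in> T - {r}" unfolding T_def by blast
  qed
  moreover have "card T = card (T - {r}) + 1" using finT rT
    by (metis card_Suc_Diff1 Suc_eq_plus1)
  ultimately show False using evenT by simp
qed

definition phi :: "'d set set \<Rightarrow> int" where
  "phi rho = int (card rho) + int (ncomp VV enV rho) + 1 - int (ncomp FF enF (EE - rho)) - int (card VV)"

lemma phi_step: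
  assumes rho: "rho \<subseteq> EE" and e: "e \<in> EE" "e \<notin> rho"
  shows "phi rho \<le> phi (insert e rho)"
proof -
  let ?iV = "(if (fst (enV e), snd (enV e)) \<in> conn VV enV rho then 0 else 1) :: nat"
  let ?iF = "(if (fst (enF e), snd (enF e)) \<in> conn FF enF (EE - insert e rho) then 0 else 1) :: nat"
  have a: "ncomp VV enV (insert e rho) + ?iV = ncomp VV enV rho"
    by (rule ncomp_insert[OF finV wfg_mono[OF wfV]]) (use rho e in auto)
  have eq: "insert e (EE - insert e rho) = EE - rho" using e by auto
  have b: "ncomp FF enF (insert e (EE - insert e rho)) + ?iF = ncomp FF enF (EE - insert e rho)"
    by (rule ncomp_insert[OF finF wfg_mono[OF wfF]]) (use e in auto)
  have c: "card (insert e rho) = card rho + 1"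
    using e finite_subset[OF rho finE] by simp
  have d: "?iV + ?iF \<le> 1" using key_parity[OF rho e] by auto
  show ?thesis unfolding phi_def using a b[unfolded eq] c d by linarith
qed

lemma phi_mono:
  assumes rho: "rho \<subseteq> EE" and C: "finite C" "C \<subseteq> EE"
  shows "phi rho \<le> phi (rho \<union> C)"
  using C
proof (induction C rule: finite_induct)
  case empty then show ?case by simp
next
  case (insert e C)
  have "phi rho \<le> phi (rho \<union> C)" using insert by auto
  also have "\<dots> \<le> phi (insert e (rho \<union> C))"
  proof (cases "e \<in> rho \<union> C")
    case True then show ?thesis by (simp add: insert_absorb)
  next
    case False then show ?thesis using rho insert.prems by (intro phi_step) auto
  qed
  finally show ?case by simp
qed

lemma duality:
  assumes rho: "rho \<subseteq> EE"
  shows "ncomp FF enF (EE - rho) + card VV = card rho + ncomp VV enV rho + 1"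
proof -
  have p0: "phi {} = 0" unfolding phi_def using ncomp_empty[OF finV, of enV] ncompF_full by simp
  have pE: "phi EE = 0" unfolding phi_def using ncomp_empty[OF finF, of enF] ncompV_full euler by simp
  have "phi {} \<le> phi ({} \<union> rho)" using rho finite_subset[OF rho finE] by (intro phi_mono) auto
  moreover have "phi rho \<le> phi (rho \<union> (EE - rho))" using rho finE by (intro phi_mono) auto
  moreover have "rho \<union> (EE - rho) = EE" using rho by auto
  ultimately have "phi rho = 0" using p0 pE by simp
  then show ?thesis unfolding phi_def by linarith
qed

end

lemma fkg_scale:
  assumes "\<And>S. S \<subseteq> V \<Longrightarrow> nu S = K * om S"
    and "\<And>X1 X2. X1 \<subseteq> V \<Longrightarrow> X2 \<subseteq> V \<Longrightarrow> om X1 * om X2 \<le> om (X1 \<inter> X2) * om (X1 \<union> X2)"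
  shows "FKG_lattice V nu"
  unfolding FKG_lattice_def
proof (intro allI impI)
  fix X1 X2 assume X: "X1 \<subseteq> V" "X2 \<subseteq> V"
  have "nu X1 * nu X2 = (K * K) * (om X1 * om X2)" using assms(1) X by (simp add: algebra_simps)
  also have "\<dots> \<le> (K * K) * (om (X1 \<inter> X2) * om (X1 \<union> X2))"
    using assms(2)[OF X] by (intro mult_left_mono) auto
  also have "\<dots> = nu (X1 \<inter> X2) * nu (X1 \<union> X2)" using assms(1) X by (simp add: algebra_simps le_infI1 le_supI)
  finally show "nu X1 * nu X2 \<le> nu (X1 \<inter> X2) * nu (X1 \<union> X2)" .
qed

context pmap
begin

lemma eta_primal_eq: "eta_primal D alpha rot s = {e\<in>EE. s (fst (enV e)) \<noteq> s (snd (enV e))}"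
proof (intro equalityI subsetI)
  fix e assume "e \<in> eta_primal D alpha rot s"
  then obtain d where d: "e = {d, alpha d}" "d \<in> D" "s (vtx rot d) \<noteq> s (vtx rot (alpha d))"
    unfolding eta_primal_def by blast
  then show "e \<in> {e\<in>EE. s (fst (enV e)) \<noteq> s (snd (enV e))}"
    using enV_edge[OF d(2)] edge_in[OF d(2)] by auto
next
  fix e assume e: "e \<in> {e\<in>EE. s (fst (enV e)) \<noteq> s (snd (enV e))}"
  then have "rep e \<in> D" "e = {rep e, alpha (rep e)}" using rep by auto
  then show "e \<in> eta_primal D alpha rot s" using e unfolding eta_primal_def enV_def by auto
qed

lemma eta_dual_eq: "eta_dual D alpha rot s = {e\<in>EE. s (fst (enF e)) \<noteq> s (snd (enF e))}"
proof (intro equalityI subsetI)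
  fix e assume "e \<in> eta_dual D alpha rot s"
  then obtain d where d: "e = {d, alpha d}" "d \<in> D" "s (fce alpha rot d) \<noteq> s (fce alpha rot (alpha d))"
    unfolding eta_dual_def by blast
  then show "e \<in> {e\<in>EE. s (fst (enF e)) \<noteq> s (snd (enF e))}"
    using enF_edge[OF d(2)] edge_in[OF d(2)] by auto
next
  fix e assume e: "e \<in> {e\<in>EE. s (fst (enF e)) \<noteq> s (snd (enF e))}"
  then have "rep e \<in> D" "e = {rep e, alpha (rep e)}" using rep by auto
  then show "e \<in> eta_dual D alpha rot s" using e unfolding eta_dual_def enF_def by auto
qed

lemma sum_restrict_Agr:
  fixes A :: "'d set set" and c :: real and g :: "'d set set \<Rightarrow> real"
  assumes A: "A \<subseteq> EE"
  shows "(\<Sum>w\<in>Pow EE. (\<Prod>e\<in>EE - w. if e \<in> A then c else 1) * (\<Prod>e\<in>w. if e \<in> A then y else 0) * g w)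
       = (\<Sum>w\<in>Pow A. c ^ card (A - w) * y ^ card w * g w)"
proof -
  have "(\<Sum>w\<in>Pow EE. (\<Prod>e\<in>EE - w. if e \<in> A then c else 1) * (\<Prod>e\<in>w. if e \<in> A then y else 0) * g w)
      = (\<Sum>w\<in>Pow A. (\<Prod>e\<in>EE - w. if e \<in> A then c else 1) * (\<Prod>e\<in>w. if e \<in> A then y else 0) * g w)"
  proof (rule sum.mono_neutral_cong_right)
    show "finite (Pow EE)" using finE by simp
    show "Pow A \<subseteq> Pow EE" using A by auto
    show "\<forall>w\<in>Pow EE - Pow A. (\<Prod>e\<in>EE - w. if e \<in> A then c else 1) * (\<Prod>e\<in>w. if e \<in> A then y else 0) * g w = 0"
    proof
      fix w assume w: "w \<in> Pow EE - Pow A"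
      then obtain e where "e \<in> w" "e \<notin> A" by auto
      moreover have "finite w" using w finE by (auto intro: finite_subset)
      ultimately have "(\<Prod>e\<in>w. if e \<in> A then y else 0) = 0" by (intro prod_zero) auto
      then show "(\<Prod>e\<in>EE - w. if e \<in> A then c else 1) * (\<Prod>e\<in>w. if e \<in> A then y else 0) * g w = 0" by simp
    qed
  qed simp
  also have "\<dots> = (\<Sum>w\<in>Pow A. c ^ card (A - w) * y ^ card w * g w)"
  proof (rule sum.cong[OF refl])
    fix w assume w: "w \<in> Pow A"
    have "(\<Prod>e\<in>EE - w. if e \<in> A then c else 1) = (\<Prod>e\<in>(EE - w) \<inter> {e. e \<in> A}. c) * (\<Prod>e\<in>(EE - w) \<inter> - {e. e \<in> A}. 1)"
      using finE by (simp add: prod.If_cases)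
    also have "(EE - w) \<inter> {e. e \<in> A} = A - w" using A by auto
    finally have 1: "(\<Prod>e\<in>EE - w. if e \<in> A then c else 1) = c ^ card (A - w)" by simp
    have 2: "(\<Prod>e\<in>w. if e \<in> A then y else 0) = y ^ card w"
      using w by (simp add: subset_iff)
    show "(\<Prod>e\<in>EE - w. if e \<in> A then c else 1) * (\<Prod>e\<in>w. if e \<in> A then y else 0) * g w = c ^ card (A - w) * y ^ card w * g w"
      unfolding 1 2 ..
  qed
  finally show ?thesis .
qed

end

locale fsetup = pmap D alpha rot for D :: "'d set" and alpha rot +
  fixes Q Q' :: "complex set" and a b :: real and f :: "complex \<Rightarrow> nat"
  assumes finQ: "finite Q" and cardQ: "card Q = 2" and finQ': "finite Q'" and cardQ': "card Q' \<ge> 1"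
    and a0: "0 < a" and a1: "a < 1" and b0: "0 < b" and b1: "b \<le> 1"
    and fbij: "bij_betw f Q {0, 1}"
begin

sublocale om: omsetup VV EE enV a "card Q'" "1 / b"
  by unfold_locales (use finV finE wfV a0 a1 b0 b1 cardQ' in auto)

abbreviation "cfg \<xi> \<equiv> config_of f Q VV \<xi>"

lemma inv_f:
  assumes n: "n \<in> {0, 1}"
  shows "inv_into Q f n \<in> Q \<and> f (inv_into Q f n) = n"
proof -
  have "n \<in> f ` Q" using fbij n unfolding bij_betw_def by simp
  then show ?thesis by (intro conjI inv_into_into f_inv_into_f)
qed

lemma cfg_PiE: "cfg \<xi> \<in> VV \<rightarrow>\<^sub>E Q"
  unfolding config_of_def using inv_f by auto

lemma cfg_eq: "v1 \<in> VV \<Longrightarrow> v2 \<in> VV \<Longrightarrow> (cfg \<xi> v1 = cfg \<xi> v2) = ((v1 \<in> \<xi>) = (v2 \<in> \<xi>))"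
proof -
  assume v: "v1 \<in> VV" "v2 \<in> VV"
  have ne: "inv_into Q f 1 \<noteq> inv_into Q f 0" using inv_f[of 0] inv_f[of 1] by (metis insertCI zero_neq_one)
  show ?thesis unfolding config_of_def using v ne by (cases "v1 \<in> \<xi>"; cases "v2 \<in> \<xi>") (simp_all add: eq_commute)
qed

lemma enV_in: "e \<in> EE \<Longrightarrow> fst (enV e) \<in> VV \<and> snd (enV e) \<in> VV"
  using wfV unfolding wfg_def by blast

lemma cfg_Agr: "e \<in> EE \<Longrightarrow> (cfg \<xi> (fst (enV e)) = cfg \<xi> (snd (enV e))) = (e \<in> Agr enV EE \<xi>)"
  using cfg_eq enV_in unfolding Agr_def by blast

lemma exp_factor:
  assumes "t = 0 \<or> t = 1"
  shows "exp (alpha_par a b + beta_par (card Q') a * t) = (1 - a) / b + (real (card Q') * a / b) * t"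
proof -
  have p1: "(1 - a) / b > 0" using a1 b0 by simp
  have p2: "1 + real (card Q') * a / (1 - a) > 0" using a0 a1 by (simp add: add_pos_nonneg)
  have e1: "exp (alpha_par a b) = (1 - a) / b" unfolding alpha_par_def using p1 by simp
  have e2: "exp (beta_par (card Q') a) = 1 + real (card Q') * a / (1 - a)" unfolding beta_par_def using p2 by simp
  from assms show ?thesis
  proof
    assume "t = 0" then show ?thesis using e1 by simp
  next
    assume t: "t = 1"
    have "exp (alpha_par a b + beta_par (card Q') a * t) = exp (alpha_par a b) * exp (beta_par (card Q') a)"
      using t by (simp add: exp_add)
    also have "\<dots> = (1 - a) / b * (1 + real (card Q') * a / (1 - a))" using e1 e2 by simp
    also have "\<dots> = (1 - a) / b + real (card Q') * a / b" using a1 b0 by (simp add: field_simps)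
    finally show ?thesis using t by simp
  qed
qed

lemma mu_weight_prod:
  assumes s': "s' \<in> VV \<rightarrow>\<^sub>E Q'"
  shows "mu_weight D alpha rot (card Q') a b (cfg \<xi>) s' =
    (\<Prod>e\<in>EE. (if e \<in> Agr enV EE \<xi> then (1 - a) / b else 1)
       + (if e \<in> Agr enV EE \<xi> then real (card Q') * a / b else 0) * kd (s' (fst (enV e))) (s' (snd (enV e))))"
proof -
  have "mu_weight D alpha rot (card Q') a b (cfg \<xi>) s' =
     exp (\<Sum>e\<in>EE. kdelta (cfg \<xi> (fst (enV e))) (cfg \<xi> (snd (enV e))) *
        (alpha_par a b + beta_par (card Q') a * kdelta (s' (fst (enV e))) (s' (snd (enV e)))))"
    unfolding mu_weight_def Let_def enV_def rep_def by simp
  also have "\<dots> = (\<Prod>e\<in>EE. exp (kdelta (cfg \<xi> (fst (enV e))) (cfg \<xi> (snd (enV e))) *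
        (alpha_par a b + beta_par (card Q') a * kdelta (s' (fst (enV e))) (s' (snd (enV e))))))"
    using finE by (rule exp_sum)
  also have "\<dots> = (\<Prod>e\<in>EE. (if e \<in> Agr enV EE \<xi> then (1 - a) / b else 1)
       + (if e \<in> Agr enV EE \<xi> then real (card Q') * a / b else 0) * kd (s' (fst (enV e))) (s' (snd (enV e))))"
  proof (rule prod.cong[OF refl])
    fix e assume e: "e \<in> EE"
    have kk: "kdelta x y = kd x y" for x y unfolding kdelta_def kd_def ..
    show "exp (kdelta (cfg \<xi> (fst (enV e))) (cfg \<xi> (snd (enV e))) *
        (alpha_par a b + beta_par (card Q') a * kdelta (s' (fst (enV e))) (s' (snd (enV e))))) =
        (if e \<in> Agr enV EE \<xi> then (1 - a) / b else 1)
       + (if e \<in> Agr enV EE \<xi> then real (card Q') * a / b else 0) * kd (s' (fst (enV e))) (s' (snd (enV e)))"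
    proof (cases "e \<in> Agr enV EE \<xi>")
      case True
      then have "kdelta (cfg \<xi> (fst (enV e))) (cfg \<xi> (snd (enV e))) = 1"
        using cfg_Agr[OF e] unfolding kdelta_def by simp
      moreover have "kd (s' (fst (enV e))) (s' (snd (enV e))) = 0 \<or> kd (s' (fst (enV e))) (s' (snd (enV e))) = 1"
        unfolding kd_def by simp
      ultimately show ?thesis using True exp_factor unfolding kk by simp
    next
      case False
      then have "kdelta (cfg \<xi> (fst (enV e))) (cfg \<xi> (snd (enV e))) = 0"
        using cfg_Agr[OF e] unfolding kdelta_def by simp
      then show ?thesis using False by simp
    qed
  qed
  finally show ?thesis .
qed

lemma AgrE: "Agr enV EE \<xi> \<subseteq> EE" unfolding Agr_def by auto

lemma mu_sum_OM:
  "(\<Sum>s'\<in>VV \<rightarrow>\<^sub>E Q'. mu_weight D alpha rot (card Q') a b (cfg \<xi>) s') = om.OM \<xi>"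
proof -
  let ?A = "Agr enV EE \<xi>"
  let ?q = "real (card Q')"
  have "(\<Sum>s'\<in>VV \<rightarrow>\<^sub>E Q'. mu_weight D alpha rot (card Q') a b (cfg \<xi>) s') =
     (\<Sum>s'\<in>VV \<rightarrow>\<^sub>E Q'. \<Prod>e\<in>EE. (if e \<in> ?A then (1 - a) / b else 1)
       + (if e \<in> ?A then ?q * a / b else 0) * kd (s' (fst (enV e))) (s' (snd (enV e))))"
    by (rule sum.cong[OF refl]) (rule mu_weight_prod)
  also have "\<dots> = (\<Sum>w\<in>Pow EE. (\<Prod>e\<in>EE - w. if e \<in> ?A then (1 - a) / b else 1)
       * (\<Prod>e\<in>w. if e \<in> ?A then ?q * a / b else 0) * ?q ^ ncomp VV enV w)"
    by (rule rc_expansion[OF finV finQ' finE wfV])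
  also have "\<dots> = (\<Sum>w\<in>Pow ?A. ((1 - a) / b) ^ card (?A - w) * (?q * a / b) ^ card w * ?q ^ ncomp VV enV w)"
    by (rule sum_restrict_Agr[OF AgrE])
  also have "\<dots> = (\<Sum>w\<in>Pow ?A. (1 / b) ^ card ?A * (a ^ card w * (1 - a) ^ card (?A - w) * hq (card Q') VV enV w))"
  proof (rule sum.cong[OF refl])
    fix w assume w: "w \<in> Pow ?A"
    have fA: "finite ?A" using AgrE finE by (rule finite_subset)
    have cA: "card ?A = card (?A - w) + card w"
      using w fA by (metis PowD card_Diff_subset card_mono finite_subset le_add_diff_inverse2)
    show "((1 - a) / b) ^ card (?A - w) * (?q * a / b) ^ card w * ?q ^ ncomp VV enV w =
      (1 / b) ^ card ?A * (a ^ card w * (1 - a) ^ card (?A - w) * hq (card Q') VV enV w)"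
      unfolding hq_def cA power_add by (simp add: power_mult_distrib power_divide field_simps)
  qed
  also have "\<dots> = om.OM \<xi>"
    unfolding om.OM_def om.HH_def rcs_def by (simp add: sum_distrib_left algebra_simps)
  finally show ?thesis .
qed

end

lemma sum_Pow_compl:
  fixes g :: "'a set \<Rightarrow> real"
  shows "(\<Sum>w\<in>Pow E. g w) = (\<Sum>r\<in>Pow E. g (E - r))"
  by (rule sum.reindex_bij_witness[where i = "\<lambda>r. E - r" and j = "\<lambda>r. E - r"]) (auto simp: double_diff)

context fsetup
begin

lemma eta_primal_cfg: "eta_primal D alpha rot (cfg \<xi>) = EE - Agr enV EE \<xi>"
  unfolding eta_primal_eq using cfg_Agr by auto

lemma P_summand:
  shows "(if eta_dual D alpha rot s' \<inter> (EE - Agr enV EE \<xi>) = {} then a ^ card (eta_dual D alpha rot s') else 0)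
    = (\<Prod>e\<in>EE. (if e \<in> Agr enV EE \<xi> then a else 0) + (if e \<in> Agr enV EE \<xi> then 1 - a else 1)
        * kd (s' (fst (enF e))) (s' (snd (enF e))))"
proof -
  let ?A = "Agr enV EE \<xi>"
  let ?H = "eta_dual D alpha rot s'"
  have H: "?H = {e\<in>EE. s' (fst (enF e)) \<noteq> s' (snd (enF e))}" by (rule eta_dual_eq)
  have "(\<Prod>e\<in>EE. (if e \<in> ?A then a else 0) + (if e \<in> ?A then 1 - a else 1) * kd (s' (fst (enF e))) (s' (snd (enF e))))
      = (\<Prod>e\<in>EE. if e \<in> ?H then (if e \<in> ?A then a else 0) else 1)"
    by (rule prod.cong[OF refl]) (auto simp: H kd_def)
  also have "\<dots> = (if ?H \<inter> (EE - ?A) = {} then a ^ card ?H else 0)"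
  proof (cases "?H \<inter> (EE - ?A) = {}")
    case True
    have "(\<Prod>e\<in>EE. if e \<in> ?H then (if e \<in> ?A then a else 0) else 1) = (\<Prod>e\<in>EE. if e \<in> ?H then a else 1)"
      by (rule prod.cong[OF refl]) (use True in auto)
    also have "\<dots> = (\<Prod>e\<in>EE \<inter> {e. e \<in> ?H}. a) * (\<Prod>e\<in>EE \<inter> - {e. e \<in> ?H}. 1)"
      using finE by (rule prod.If_cases)
    also have "EE \<inter> {e. e \<in> ?H} = ?H" using H by auto
    finally show ?thesis using True by simp
  next
    case False
    then obtain e where e: "e \<in> ?H" "e \<in> EE" "e \<notin> ?A" by auto
    have "(\<Prod>e\<in>EE. if e \<in> ?H then (if e \<in> ?A then a else 0) else 1) = 0"
      by (rule prod_zero[OF finE]) (use e in auto)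
    then show ?thesis using False by simp
  qed
  finally show ?thesis by simp
qed

lemma P_sum_OM:
  "(\<Sum>s'\<in>FF \<rightarrow>\<^sub>E Q'. (if eta_dual D alpha rot s' \<inter> (EE - Agr enV EE \<xi>) = {} then a ^ card (eta_dual D alpha rot s') else 0))
     * real (card Q') ^ card VV = real (card Q') * rcs a (hq (card Q') VV enV) (Agr enV EE \<xi>)"
proof -
  let ?A = "Agr enV EE \<xi>"
  let ?q = "real (card Q')"
  let ?x = "\<lambda>e. if e \<in> ?A then a else 0"
  let ?y = "\<lambda>e. if e \<in> ?A then 1 - a else 1"
  have "(\<Sum>s'\<in>FF \<rightarrow>\<^sub>E Q'. (if eta_dual D alpha rot s' \<inter> (EE - ?A) = {} then a ^ card (eta_dual D alpha rot s') else 0))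
      = (\<Sum>s'\<in>FF \<rightarrow>\<^sub>E Q'. \<Prod>e\<in>EE. ?x e + ?y e * kd (s' (fst (enF e))) (s' (snd (enF e))))"
    by (rule sum.cong[OF refl]) (rule P_summand)
  also have "\<dots> = (\<Sum>w\<in>Pow EE. (\<Prod>e\<in>EE - w. ?x e) * (\<Prod>e\<in>w. ?y e) * ?q ^ ncomp FF enF w)"
    by (rule rc_expansion[OF finF finQ' finE wfF])
  also have "\<dots> = (\<Sum>r\<in>Pow EE. (\<Prod>e\<in>EE - (EE - r). ?x e) * (\<Prod>e\<in>EE - r. ?y e) * ?q ^ ncomp FF enF (EE - r))"
    by (rule sum_Pow_compl)
  also have "\<dots> = (\<Sum>r\<in>Pow EE. (\<Prod>e\<in>EE - r. ?y e) * (\<Prod>e\<in>r. ?x e) * ?q ^ ncomp FF enF (EE - r))"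
    by (rule sum.cong[OF refl]) (auto simp: Diff_Diff_Int Int_absorb1 mult.commute)
  also have "\<dots> = (\<Sum>r\<in>Pow ?A. (1 - a) ^ card (?A - r) * a ^ card r * ?q ^ ncomp FF enF (EE - r))"
    by (rule sum_restrict_Agr[OF AgrE])
  finally have S: "(\<Sum>s'\<in>FF \<rightarrow>\<^sub>E Q'. (if eta_dual D alpha rot s' \<inter> (EE - ?A) = {} then a ^ card (eta_dual D alpha rot s') else 0))
     = (\<Sum>r\<in>Pow ?A. (1 - a) ^ card (?A - r) * a ^ card r * ?q ^ ncomp FF enF (EE - r))" .
  have "(\<Sum>r\<in>Pow ?A. (1 - a) ^ card (?A - r) * a ^ card r * ?q ^ ncomp FF enF (EE - r)) * ?q ^ card VV
      = (\<Sum>r\<in>Pow ?A. ?q * (a ^ card r * (1 - a) ^ card (?A - r) * hq (card Q') VV enV r))"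
    unfolding sum_distrib_right
  proof (rule sum.cong[OF refl])
    fix r assume r: "r \<in> Pow ?A"
    have "r \<subseteq> EE" using r AgrE by auto
    then have d: "ncomp FF enF (EE - r) + card VV = card r + ncomp VV enV r + 1" by (rule duality)
    have "?q ^ ncomp FF enF (EE - r) * ?q ^ card VV = ?q * ?q ^ (card r + ncomp VV enV r)"
      unfolding power_add[symmetric] d by simp
    then show "(1 - a) ^ card (?A - r) * a ^ card r * ?q ^ ncomp FF enF (EE - r) * ?q ^ card VV
      = ?q * (a ^ card r * (1 - a) ^ card (?A - r) * hq (card Q') VV enV r)"
      unfolding hq_def by (simp add: algebra_simps)
  qed
  also have "\<dots> = ?q * rcs a (hq (card Q') VV enV) ?A"
    unfolding rcs_def by (simp add: sum_distrib_left)
  finally show ?thesis using S by simp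
qed

end

context fsetup
begin

lemma mu_marg_OM:
  "mu_marg D alpha rot Q Q' a b (cfg \<xi>) =
     (1 / (\<Sum>p\<in>(VV \<rightarrow>\<^sub>E Q) \<times> (VV \<rightarrow>\<^sub>E Q'). mu_weight D alpha rot (card Q') a b (fst p) (snd p))) * om.OM \<xi>"
proof -
  let ?Z = "(\<Sum>p\<in>(VV \<rightarrow>\<^sub>E Q) \<times> (VV \<rightarrow>\<^sub>E Q'). mu_weight D alpha rot (card Q') a b (fst p) (snd p))"
  have "mu_marg D alpha rot Q Q' a b (cfg \<xi>) = (\<Sum>s'\<in>VV \<rightarrow>\<^sub>E Q'. mu_weight D alpha rot (card Q') a b (cfg \<xi>) s' / ?Z)"
    unfolding mu_marg_def mu_prob_def using cfg_PiE by (intro sum.cong refl) simp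
  also have "\<dots> = (\<Sum>s'\<in>VV \<rightarrow>\<^sub>E Q'. mu_weight D alpha rot (card Q') a b (cfg \<xi>) s') / ?Z"
    by (rule sum_divide_distrib[symmetric])
  also have "\<dots> = (1 / ?Z) * om.OM \<xi>" unfolding mu_sum_OM by simp
  finally show ?thesis .
qed

lemma P_marg_OM:
  "P_marg D alpha rot Q Q' a b (cfg \<xi>) =
     (b ^ card EE * real (card Q') / ((\<Sum>p\<in>Sigma_space D alpha rot Q Q'. P_weight D alpha rot a b (fst p) (snd p))
        * real (card Q') ^ card VV)) * om.OM \<xi>"
proof -
  let ?Z = "(\<Sum>p\<in>Sigma_space D alpha rot Q Q'. P_weight D alpha rot a b (fst p) (snd p))"
  let ?A = "Agr enV EE \<xi>"
  let ?q = "real (card Q')"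
  let ?g = "\<lambda>s'. (if eta_dual D alpha rot s' \<inter> (EE - ?A) = {} then a ^ card (eta_dual D alpha rot s') else 0)"
  have "P_marg D alpha rot Q Q' a b (cfg \<xi>) = (\<Sum>s'\<in>FF \<rightarrow>\<^sub>E Q'. (b ^ card (EE - ?A) / ?Z) * ?g s')"
    unfolding P_marg_def
  proof (rule sum.cong[OF refl])
    fix s' assume s': "s' \<in> FF \<rightarrow>\<^sub>E Q'"
    have mem: "((cfg \<xi>, s') \<in> Sigma_space D alpha rot Q Q') = (eta_dual D alpha rot s' \<inter> (EE - ?A) = {})"
      using cfg_PiE[of \<xi>] s' eta_primal_cfg[of \<xi>] unfolding Sigma_space_def by auto
    show "P_prob D alpha rot Q Q' a b (cfg \<xi>) s' = (b ^ card (EE - ?A) / ?Z) * ?g s'"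
      unfolding P_prob_def mem P_weight_def eta_primal_cfg by simp
  qed
  also have "\<dots> = (b ^ card (EE - ?A) / ?Z) * (\<Sum>s'\<in>FF \<rightarrow>\<^sub>E Q'. ?g s')"
    by (rule sum_distrib_left[symmetric])
  also have "(\<Sum>s'\<in>FF \<rightarrow>\<^sub>E Q'. ?g s') = ?q * rcs a (hq (card Q') VV enV) ?A / ?q ^ card VV"
    using P_sum_OM[of \<xi>] cardQ' by (simp add: field_simps)
  also have "b ^ card (EE - ?A) = b ^ card EE * (1 / b) ^ card ?A"
  proof -
    have fA: "finite ?A" using AgrE finE by (rule finite_subset)
    have c: "card (EE - ?A) = card EE - card ?A" using fA AgrE by (rule card_Diff_subset)
    have le: "card ?A \<le> card EE" using AgrE finE by (intro card_mono) auto
    have "b ^ card EE = b ^ (card EE - card ?A) * b ^ card ?A" using le by (simp add: power_add[symmetric])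
    then show ?thesis unfolding c using b0 by (simp add: power_one_over field_simps)
  qed
  finally show ?thesis
    unfolding om.OM_def om.HH_def by (simp add: field_simps)
qed

theorem both_fkg:
  "FKG_lattice VV (\<lambda>\<xi>. mu_marg D alpha rot Q Q' a b (cfg \<xi>)) \<and> FKG_lattice VV (\<lambda>\<xi>. P_marg D alpha rot Q Q' a b (cfg \<xi>))"
proof
  show "FKG_lattice VV (\<lambda>\<xi>. mu_marg D alpha rot Q Q' a b (cfg \<xi>))"
    by (rule fkg_scale[OF mu_marg_OM om.OM_fkg])
  show "FKG_lattice VV (\<lambda>\<xi>. P_marg D alpha rot Q Q' a b (cfg \<xi>))"
    by (rule fkg_scale[OF P_marg_OM om.OM_fkg])
qed

end

theorem proposition4p5:
  fixes D :: "'d set" and alpha rot :: "'d \<Rightarrow> 'd"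
    and Q Q' :: "complex set" and a b :: real and f :: "complex \<Rightarrow> nat"
  assumes "planar_map D alpha rot"
    and "finite Q" and "uminus ` Q = Q" and "card Q = 2"
    and "finite Q'" and "uminus ` Q' = Q'" and "card Q' \<ge> 1"
    and "0 < a" and "a < 1" and "0 < b" and "b \<le> 1"
    and "bij_betw f Q {0, 1}"
  shows "FKG_lattice (Verts D rot)
           (\<lambda>\<xi>. mu_marg D alpha rot Q Q' a b (config_of f Q (Verts D rot) \<xi>))
       \<and> FKG_lattice (Verts D rot)
           (\<lambda>\<xi>. P_marg D alpha rot Q Q' a b (config_of f Q (Verts D rot) \<xi>))"
proof -
  interpret fsetup D alpha rot Q Q' a b f
    by unfold_locales (use assms in auto)
  show ?thesis by (rule both_fkg)
qed

end
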